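(* Let $A$ be an $\Omega$-magma in a braided monoidal category $\mathcal C$. Let $\mathcal D$ be a full subcategory of $\mathbf{Comeas}(A,A)$ having an initial object $\rho_0\colon A\to A\otimes B_0$, and let $\mathbf{Coact}(A)(\mathcal D)$ be the full subcategory of $\mathbf{Coact}(A)$ consisting of the coactions whose underlying comeasurings belong to $\mathcal D$. Suppose that $\mathcal D$ is closed under coarsenings, and that the canonical isomorphism $A\to A\otimes\mathbbm 1$ (a comeasuring for the monoid $\mathbbm 1$) and the comeasuring $(\rho_0\otimes\mathrm{id}_{B_0})\rho_0\colon A\to A\otimes B_0\otimes B_0$ (for the monoid $B_0\otimes B_0$) are objects of $\mathcal D$. Then the monoid $B_0$ admits a unique comonoid structure turning $\rho_0$ into a coaction, and this coaction is an initial object of $\mathbf{Coact}(A)(\mathcal D)$.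
   Context: Fix a set $\Omega$ with maps $s,t\colon\Omega\to\mathbb Z_{\ge0}$. An $\Omega$-magma is an object $A$ with morphisms $\omega_A\colon A^{\otimes s(\omega)}\to A^{\otimes t(\omega)}$, $\omega\in\Omega$ ($A^{\otimes0}=\mathbbm 1$, no axioms). For a monoid $(Q,\mu,u)$ and $\rho_i\colon A_i\to B_i\otimes Q$, $\rho_1\tilde\otimes\rho_2:=(\mathrm{id}\otimes\mu)(\mathrm{id}_{B_1}\otimes c_{Q,B_2}\otimes\mathrm{id}_Q)(\rho_1\otimes\rho_2)$, $c$ the braiding; $\rho^{\tilde\otimes n}$ by iteration, $\rho^{\tilde\otimes0}=(\mathbbm 1\xrightarrow{u}Q\cong\mathbbm 1\otimes Q)$. A comeasuring $\rho\colon A\to B\otimes Q$ ($Q$ a monoid) satisfies $(\omega_B\otimes\mathrm{id}_Q)\rho^{\tilde\otimes s(\omega)}=\rho^{\tilde\otimes t(\omega)}\omega_A$ for all $\omega$. $\mathbf{Comeas}(A,A)$: objects comeasurings $A\to A\otimes Q$, morphisms monoid homomorphisms $\varphi$ with $(\mathrm{id}_A\otimes\varphi)\rho_1=\rho_2$. $\mathcal D$ is closed under coarsenings if for every object $\rho\colon A\to A\otimes Q_1$ of $\mathcal D$ and every monoid homomorphism $\tau\colon Q_1\to Q_2$, $(\mathrm{id}_A\otimes\tau)\rho$ is in $\mathcal D$. For a bimonoid $B$ (monoid and comonoid with $\Delta,\varepsilon$ monoid homomorphisms, $B\otimes B$ a monoid via the braiding), a coaction of $B$ on $A$ is a comeasuring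 $\rho\colon A\to A\otimes B$ that also makes $A$ a right $B$-comodule. $\mathbf{Coact}(A)$: objects coactions $A\to A\otimes B$ ($B$ arbitrary bimonoid), morphisms bimonoid homomorphisms $\varphi$ with $(\mathrm{id}_A\otimes\varphi)\rho_1=\rho_2$. *)

theory Defs
  imports Main
begin

text \<open>Objects are the elements of type 'o, arrows the elements of the set arr C.
  cmp C g f is the composite g after f; tns/tnm are the tensor product on objects/arrows;
  un is the unit object; asc X Y Z : (X*Y)*Z -> X*(Y*Z); lu X : 1*X -> X;
  ru X : X*1 -> X; br X Y : X*Y -> Y*X is the braiding.\<close>

record ('o,'m) bmcat =
  arr :: "'m set"
  dm  :: "'m \<Rightarrow> 'o"
  cd  :: "'m \<Rightarrow> 'o"
  idt :: "'o \<Rightarrow> 'm"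
  cmp :: "'m \<Rightarrow> 'm \<Rightarrow> 'm"
  tns :: "'o \<Rightarrow> 'o \<Rightarrow> 'o"
  tnm :: "'m \<Rightarrow> 'm \<Rightarrow> 'm"
  un  :: "'o"
  asc :: "'o \<Rightarrow> 'o \<Rightarrow> 'o \<Rightarrow> 'm"
  lu  :: "'o \<Rightarrow> 'm"
  ru  :: "'o \<Rightarrow> 'm"
  br  :: "'o \<Rightarrow> 'o \<Rightarrow> 'm"

definition hom :: "('o,'m) bmcat \<Rightarrow> 'o \<Rightarrow> 'o \<Rightarrow> 'm set" where
  "hom C X Y = {f. f \<in> arr C \<and> dm C f = X \<and> cd C f = Y}"

definition is_iso :: "('o,'m) bmcat \<Rightarrow> 'm \<Rightarrow> bool" where
  "is_iso C f \<longleftrightarrow> f \<in> arr C \<and> (\<exists>g. g \<in> hom C (cd C f) (dm C f)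
      \<and> cmp C g f = idt C (dm C f) \<and> cmp C f g = idt C (cd C f))"

definition inv_arr :: "('o,'m) bmcat \<Rightarrow> 'm \<Rightarrow> 'm" where
  "inv_arr C f = (SOME g. g \<in> hom C (cd C f) (dm C f)
      \<and> cmp C g f = idt C (dm C f) \<and> cmp C f g = idt C (cd C f))"

definition braided_monoidal_cat :: "('o,'m) bmcat \<Rightarrow> bool" where
  "braided_monoidal_cat C \<longleftrightarrow>
    \<comment> \<open>category\<close>
    (\<forall>X. idt C X \<in> hom C X X) \<and>
    (\<forall>f g. f \<in> arr C \<and> g \<in> arr C \<and> cd C f = dm C g \<longrightarrow> cmp C g f \<in> hom C (dm C f) (cd C g)) \<and>
    (\<forall>f. f \<in> arr C \<longrightarrow> cmp C f (idt C (dm C f)) = f \<and> cmp C (idt C (cd C f)) f = f) \<and>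
    (\<forall>f g h. f \<in> arr C \<and> g \<in> arr C \<and> h \<in> arr C \<and> cd C f = dm C g \<and> cd C g = dm C h
        \<longrightarrow> cmp C h (cmp C g f) = cmp C (cmp C h g) f) \<and>
    \<comment> \<open>tensor bifunctor\<close>
    (\<forall>f g. f \<in> arr C \<and> g \<in> arr C \<longrightarrow>
        tnm C f g \<in> hom C (tns C (dm C f) (dm C g)) (tns C (cd C f) (cd C g))) \<and>
    (\<forall>X Y. tnm C (idt C X) (idt C Y) = idt C (tns C X Y)) \<and>
    (\<forall>f g f' g'. f \<in> arr C \<and> g \<in> arr C \<and> f' \<in> arr C \<and> g' \<in> arr C \<and>
        cd C f = dm C g \<and> cd C f' = dm C g' \<longrightarrow>
        tnm C (cmp C g f) (cmp C g' f') = cmp C (tnm C g g') (tnm C f f')) \<and>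
    \<comment> \<open>associator\<close>
    (\<forall>X Y Z. asc C X Y Z \<in> hom C (tns C (tns C X Y) Z) (tns C X (tns C Y Z)) \<and> is_iso C (asc C X Y Z)) \<and>
    (\<forall>f g h. f \<in> arr C \<and> g \<in> arr C \<and> h \<in> arr C \<longrightarrow>
        cmp C (asc C (cd C f) (cd C g) (cd C h)) (tnm C (tnm C f g) h)
        = cmp C (tnm C f (tnm C g h)) (asc C (dm C f) (dm C g) (dm C h))) \<and>
    \<comment> \<open>unitors\<close>
    (\<forall>X. lu C X \<in> hom C (tns C (un C) X) X \<and> is_iso C (lu C X)) \<and>
    (\<forall>f. f \<in> arr C \<longrightarrow> cmp C f (lu C (dm C f)) = cmp C (lu C (cd C f)) (tnm C (idt C (un C)) f)) \<and>
    (\<forall>X. ru C X \<in> hom C (tns C X (un C)) X \<and> is_iso C (ru C X)) \<and>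
    (\<forall>f. f \<in> arr C \<longrightarrow> cmp C f (ru C (dm C f)) = cmp C (ru C (cd C f)) (tnm C f (idt C (un C)))) \<and>
    \<comment> \<open>pentagon and triangle\<close>
    (\<forall>W X Y Z. cmp C (asc C W X (tns C Y Z)) (asc C (tns C W X) Y Z)
        = cmp C (tnm C (idt C W) (asc C X Y Z))
            (cmp C (asc C W (tns C X Y) Z) (tnm C (asc C W X Y) (idt C Z)))) \<and>
    (\<forall>X Y. cmp C (tnm C (idt C X) (lu C Y)) (asc C X (un C) Y) = tnm C (ru C X) (idt C Y)) \<and>
    \<comment> \<open>braiding\<close>
    (\<forall>X Y. br C X Y \<in> hom C (tns C X Y) (tns C Y X) \<and> is_iso C (br C X Y)) \<and>
    (\<forall>f g. f \<in> arr C \<and> g \<in> arr C \<longrightarrow>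
        cmp C (br C (cd C f) (cd C g)) (tnm C f g) = cmp C (tnm C g f) (br C (dm C f) (dm C g))) \<and>
    (\<forall>X Y Z. cmp C (asc C Y Z X) (cmp C (br C X (tns C Y Z)) (asc C X Y Z))
        = cmp C (tnm C (idt C Y) (br C X Z)) (cmp C (asc C Y X Z) (tnm C (br C X Y) (idt C Z)))) \<and>
    (\<forall>X Y Z. cmp C (inv_arr C (asc C Z X Y)) (cmp C (br C (tns C X Y) Z) (inv_arr C (asc C X Y Z)))
        = cmp C (tnm C (br C X Z) (idt C Y))
            (cmp C (inv_arr C (asc C X Z Y)) (tnm C (idt C X) (br C Y Z))))"

definition monoid_obj :: "('o,'m) bmcat \<Rightarrow> 'o \<Rightarrow> 'm \<Rightarrow> 'm \<Rightarrow> bool" where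
  "monoid_obj C Q m u \<longleftrightarrow> m \<in> hom C (tns C Q Q) Q \<and> u \<in> hom C (un C) Q \<and>
     cmp C m (tnm C m (idt C Q)) = cmp C m (cmp C (tnm C (idt C Q) m) (asc C Q Q Q)) \<and>
     cmp C m (tnm C u (idt C Q)) = lu C Q \<and>
     cmp C m (tnm C (idt C Q) u) = ru C Q"

definition comonoid_obj :: "('o,'m) bmcat \<Rightarrow> 'o \<Rightarrow> 'm \<Rightarrow> 'm \<Rightarrow> bool" where
  "comonoid_obj C Q d e \<longleftrightarrow> d \<in> hom C Q (tns C Q Q) \<and> e \<in> hom C Q (un C) \<and>
     cmp C (asc C Q Q Q) (cmp C (tnm C d (idt C Q)) d) = cmp C (tnm C (idt C Q) d) d \<and>
     cmp C (lu C Q) (cmp C (tnm C e (idt C Q)) d) = idt C Q \<and>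
     cmp C (ru C Q) (cmp C (tnm C (idt C Q) e) d) = idt C Q"

definition monoid_hom :: "('o,'m) bmcat \<Rightarrow> 'o \<Rightarrow> 'm \<Rightarrow> 'm \<Rightarrow> 'o \<Rightarrow> 'm \<Rightarrow> 'm \<Rightarrow> 'm \<Rightarrow> bool" where
  "monoid_hom C Q1 m1 u1 Q2 m2 u2 \<phi> \<longleftrightarrow> \<phi> \<in> hom C Q1 Q2 \<and>
     cmp C \<phi> m1 = cmp C m2 (tnm C \<phi> \<phi>) \<and> cmp C \<phi> u1 = u2"

definition comonoid_hom :: "('o,'m) bmcat \<Rightarrow> 'o \<Rightarrow> 'm \<Rightarrow> 'm \<Rightarrow> 'o \<Rightarrow> 'm \<Rightarrow> 'm \<Rightarrow> 'm \<Rightarrow> bool" where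
  "comonoid_hom C Q1 d1 e1 Q2 d2 e2 \<phi> \<longleftrightarrow> \<phi> \<in> hom C Q1 Q2 \<and>
     cmp C (tnm C \<phi> \<phi>) d1 = cmp C d2 \<phi> \<and> cmp C e2 \<phi> = e1"

text \<open>Middle interchange (a*b)*(c*d) -> (a*c)*(b*d), built from associators and the braiding.\<close>
definition mid :: "('o,'m) bmcat \<Rightarrow> 'o \<Rightarrow> 'o \<Rightarrow> 'o \<Rightarrow> 'o \<Rightarrow> 'm" where
  "mid C a b c d =
     cmp C (inv_arr C (asc C a c (tns C b d)))
    (cmp C (tnm C (idt C a) (asc C c b d))
    (cmp C (tnm C (idt C a) (tnm C (br C b c) (idt C d)))
    (cmp C (tnm C (idt C a) (inv_arr C (asc C b c d)))
           (asc C a b (tns C c d)))))"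

definition mu_tens :: "('o,'m) bmcat \<Rightarrow> 'o \<Rightarrow> 'm \<Rightarrow> 'o \<Rightarrow> 'm \<Rightarrow> 'm" where
  "mu_tens C Q1 m1 Q2 m2 = cmp C (tnm C m1 m2) (mid C Q1 Q2 Q1 Q2)"

definition unit_tens :: "('o,'m) bmcat \<Rightarrow> 'm \<Rightarrow> 'm \<Rightarrow> 'm" where
  "unit_tens C u1 u2 = cmp C (tnm C u1 u2) (inv_arr C (lu C (un C)))"

definition bimonoid_obj :: "('o,'m) bmcat \<Rightarrow> 'o \<Rightarrow> 'm \<Rightarrow> 'm \<Rightarrow> 'm \<Rightarrow> 'm \<Rightarrow> bool" where
  "bimonoid_obj C B m u d e \<longleftrightarrow> monoid_obj C B m u \<and> comonoid_obj C B d e \<and>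
     monoid_hom C B m u (tns C B B) (mu_tens C B m B m) (unit_tens C u u) d \<and>
     monoid_hom C B m u (un C) (lu C (un C)) (idt C (un C)) e"

definition bimonoid_hom :: "('o,'m) bmcat \<Rightarrow> 'o \<Rightarrow> 'm \<Rightarrow> 'm \<Rightarrow> 'm \<Rightarrow> 'm
     \<Rightarrow> 'o \<Rightarrow> 'm \<Rightarrow> 'm \<Rightarrow> 'm \<Rightarrow> 'm \<Rightarrow> 'm \<Rightarrow> bool" where
  "bimonoid_hom C B1 m1 u1 d1 e1 B2 m2 u2 d2 e2 \<phi> \<longleftrightarrow>
     monoid_hom C B1 m1 u1 B2 m2 u2 \<phi> \<and> comonoid_hom C B1 d1 e1 B2 d2 e2 \<phi>"

fun tpow_obj :: "('o,'m) bmcat \<Rightarrow> 'o \<Rightarrow> nat \<Rightarrow> 'o" where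
  "tpow_obj C A 0 = un C"
| "tpow_obj C A (Suc 0) = A"
| "tpow_obj C A (Suc (Suc n)) = tns C (tpow_obj C A (Suc n)) A"

text \<open>rho1 ~* rho2 for rho_i : A_i -> B_i * Q, landing in (B1*B2)*Q.\<close>
definition ttens :: "('o,'m) bmcat \<Rightarrow> 'o \<Rightarrow> 'm \<Rightarrow> 'o \<Rightarrow> 'o \<Rightarrow> 'm \<Rightarrow> 'm \<Rightarrow> 'm" where
  "ttens C Q m B1 B2 r1 r2 =
     cmp C (tnm C (idt C (tns C B1 B2)) m)
    (cmp C (inv_arr C (asc C B1 B2 (tns C Q Q)))
    (cmp C (tnm C (idt C B1) (asc C B2 Q Q))
    (cmp C (tnm C (idt C B1) (tnm C (br C Q B2) (idt C Q)))
    (cmp C (tnm C (idt C B1) (inv_arr C (asc C Q B2 Q)))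
    (cmp C (asc C B1 Q (tns C B2 Q))
           (tnm C r1 r2))))))"

fun ttpow :: "('o,'m) bmcat \<Rightarrow> 'o \<Rightarrow> 'm \<Rightarrow> 'm \<Rightarrow> 'o \<Rightarrow> 'm \<Rightarrow> nat \<Rightarrow> 'm" where
  "ttpow C Q m u B r 0 = cmp C (inv_arr C (lu C Q)) u"
| "ttpow C Q m u B r (Suc 0) = r"
| "ttpow C Q m u B r (Suc (Suc n)) =
     ttens C Q m (tpow_obj C B (Suc n)) B (ttpow C Q m u B r (Suc n)) r"

definition omega_magma :: "('o,'m) bmcat \<Rightarrow> 'w set \<Rightarrow> ('w \<Rightarrow> nat) \<Rightarrow> ('w \<Rightarrow> nat)
     \<Rightarrow> 'o \<Rightarrow> ('w \<Rightarrow> 'm) \<Rightarrow> bool" where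
  "omega_magma C Om s t A ops \<longleftrightarrow>
     (\<forall>w\<in>Om. ops w \<in> hom C (tpow_obj C A (s w)) (tpow_obj C A (t w)))"

definition comeasuring :: "('o,'m) bmcat \<Rightarrow> 'w set \<Rightarrow> ('w \<Rightarrow> nat) \<Rightarrow> ('w \<Rightarrow> nat)
     \<Rightarrow> ('w \<Rightarrow> 'm) \<Rightarrow> ('w \<Rightarrow> 'm) \<Rightarrow> 'o \<Rightarrow> 'o \<Rightarrow> 'o \<Rightarrow> 'm \<Rightarrow> 'm \<Rightarrow> 'm \<Rightarrow> bool" where
  "comeasuring C Om s t opsA opsB A B Q m u r \<longleftrightarrow>
     monoid_obj C Q m u \<and> r \<in> hom C A (tns C B Q) \<and>
     (\<forall>w\<in>Om. cmp C (tnm C (opsB w) (idt C Q)) (ttpow C Q m u A r (s w))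
              = cmp C (ttpow C Q m u B r (t w)) (opsA w))"

definition coaction :: "('o,'m) bmcat \<Rightarrow> 'w set \<Rightarrow> ('w \<Rightarrow> nat) \<Rightarrow> ('w \<Rightarrow> nat)
     \<Rightarrow> ('w \<Rightarrow> 'm) \<Rightarrow> 'o \<Rightarrow> 'o \<Rightarrow> 'm \<Rightarrow> 'm \<Rightarrow> 'm \<Rightarrow> 'm \<Rightarrow> 'm \<Rightarrow> bool" where
  "coaction C Om s t ops A B m u d e r \<longleftrightarrow>
     bimonoid_obj C B m u d e \<and>
     comeasuring C Om s t ops ops A A B m u r \<and>
     cmp C (asc C A B B) (cmp C (tnm C r (idt C B)) r) = cmp C (tnm C (idt C A) d) r \<and>
     cmp C (ru C A) (cmp C (tnm C (idt C A) e) r) = idt C A"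

end

theory Submission
  imports Defs
begin


locale BMC = fixes C :: "('o,'m) bmcat"
  assumes bmc: "braided_monoidal_cat C"
begin

abbreviation Arr :: "'m \<Rightarrow> bool" where "Arr f \<equiv> f \<in> arr C"
abbreviation Dm where "Dm f \<equiv> dm C f"
abbreviation Cd where "Cd f \<equiv> cd C f"
abbreviation Cp (infixr "\<bullet>" 55) where "g \<bullet> f \<equiv> cmp C g f"
abbreviation Tm (infixr "\<otimes>" 60) where "f \<otimes> g \<equiv> tnm C f g"
abbreviation To (infixr "\<odot>" 60) where "X \<odot> Y \<equiv> tns C X Y"
abbreviation I where "I \<equiv> un C"
abbreviation Id where "Id X \<equiv> idt C X"
abbreviation as where "as X Y Z \<equiv> asc C X Y Z"
abbreviation as' where "as' X Y Z \<equiv> inv_arr C (asc C X Y Z)"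
abbreviation lu' where "lu' X \<equiv> inv_arr C (lu C X)"
abbreviation ru' where "ru' X \<equiv> inv_arr C (ru C X)"
abbreviation lu0 where "lu0 X \<equiv> lu C X"
abbreviation ru0 where "ru0 X \<equiv> ru C X"
abbreviation sg where "sg X Y \<equiv> br C X Y"
abbreviation sg' where "sg' X Y \<equiv> inv_arr C (br C X Y)"

lemma B: "braided_monoidal_cat C" by (rule bmc)
lemmas BB = B[unfolded braided_monoidal_cat_def]
lemmas B1 = BB[THEN conjunct1]
lemmas B2 = BB[THEN conjunct2, THEN conjunct1]
lemmas B3 = BB[THEN conjunct2, THEN conjunct2, THEN conjunct1]
lemmas B4 = BB[THEN conjunct2, THEN conjunct2, THEN conjunct2, THEN conjunct1]
lemmas B5 = BB[THEN conjunct2, THEN conjunct2, THEN conjunct2, THEN conjunct2, THEN conjunct1]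
lemmas B6 = BB[THEN conjunct2, THEN conjunct2, THEN conjunct2, THEN conjunct2, THEN conjunct2, THEN conjunct1]
lemmas B7 = BB[THEN conjunct2, THEN conjunct2, THEN conjunct2, THEN conjunct2, THEN conjunct2, THEN conjunct2, THEN conjunct1]
lemmas B8' = BB[THEN conjunct2, THEN conjunct2, THEN conjunct2, THEN conjunct2, THEN conjunct2, THEN conjunct2, THEN conjunct2]
lemmas B8 = B8'[THEN conjunct1]
lemmas B9 = B8'[THEN conjunct2, THEN conjunct1]
lemmas B10 = B8'[THEN conjunct2, THEN conjunct2, THEN conjunct1]
lemmas B11 = B8'[THEN conjunct2, THEN conjunct2, THEN conjunct2, THEN conjunct1]
lemmas B12 = B8'[THEN conjunct2, THEN conjunct2, THEN conjunct2, THEN conjunct2, THEN conjunct1]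
lemmas B13 = B8'[THEN conjunct2, THEN conjunct2, THEN conjunct2, THEN conjunct2, THEN conjunct2, THEN conjunct1]
lemmas B14' = B8'[THEN conjunct2, THEN conjunct2, THEN conjunct2, THEN conjunct2, THEN conjunct2, THEN conjunct2]
lemmas B14 = B14'[THEN conjunct1]
lemmas B15 = B14'[THEN conjunct2, THEN conjunct1]
lemmas B16 = B14'[THEN conjunct2, THEN conjunct2, THEN conjunct1]
lemmas B17 = B14'[THEN conjunct2, THEN conjunct2, THEN conjunct2, THEN conjunct1]
lemmas B18 = B14'[THEN conjunct2, THEN conjunct2, THEN conjunct2, THEN conjunct2, THEN conjunct1]
lemmas B19 = B14'[THEN conjunct2, THEN conjunct2, THEN conjunct2, THEN conjunct2, THEN conjunct2]

lemma id_hom: "Id X \<in> hom C X X" using B1 by blast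
lemma comp_hom0: "Arr f \<Longrightarrow> Arr g \<Longrightarrow> Cd f = Dm g \<Longrightarrow> g \<bullet> f \<in> hom C (Dm f) (Cd g)"
  using B2 by blast
lemma idr0: "Arr f \<Longrightarrow> f \<bullet> Id (Dm f) = f" using B3 by blast
lemma idl0: "Arr f \<Longrightarrow> Id (Cd f) \<bullet> f = f" using B3 by blast
lemma assoc0: "Arr f \<Longrightarrow> Arr g \<Longrightarrow> Arr h \<Longrightarrow> Cd f = Dm g \<Longrightarrow> Cd g = Dm h \<Longrightarrow>
   h \<bullet> (g \<bullet> f) = (h \<bullet> g) \<bullet> f" using B4 by blast
lemma tens_hom0: "Arr f \<Longrightarrow> Arr g \<Longrightarrow> f \<otimes> g \<in> hom C (Dm f \<odot> Dm g) (Cd f \<odot> Cd g)"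
  using B5 by blast
lemma tid: "Id X \<otimes> Id Y = Id (X \<odot> Y)" using B6 by blast
lemma interchange0: "Arr f \<Longrightarrow> Arr g \<Longrightarrow> Arr f' \<Longrightarrow> Arr g' \<Longrightarrow> Cd f = Dm g \<Longrightarrow> Cd f' = Dm g' \<Longrightarrow>
  (g \<bullet> f) \<otimes> (g' \<bullet> f') = (g \<otimes> g') \<bullet> (f \<otimes> f')"
  using B7 by blast
lemma as_hom: "as X Y Z \<in> hom C ((X \<odot> Y) \<odot> Z) (X \<odot> (Y \<odot> Z))" and as_iso: "is_iso C (as X Y Z)"
  using B8 by blast+
lemma as_nat0: "Arr f \<Longrightarrow> Arr g \<Longrightarrow> Arr h \<Longrightarrow>
  as (Cd f) (Cd g) (Cd h) \<bullet> ((f \<otimes> g) \<otimes> h) = (f \<otimes> (g \<otimes> h)) \<bullet> as (Dm f) (Dm g) (Dm h)"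
  using B9 by blast
lemma lu_hom: "lu0 X \<in> hom C (I \<odot> X) X" and lu_iso: "is_iso C (lu0 X)"
  using B10 by blast+
lemma lu_nat0: "Arr f \<Longrightarrow> f \<bullet> lu0 (Dm f) = lu0 (Cd f) \<bullet> (Id I \<otimes> f)"
  using B11 by blast
lemma ru_hom: "ru0 X \<in> hom C (X \<odot> I) X" and ru_iso: "is_iso C (ru0 X)"
  using B12 by blast+
lemma ru_nat0: "Arr f \<Longrightarrow> f \<bullet> ru0 (Dm f) = ru0 (Cd f) \<bullet> (f \<otimes> Id I)"
  using B13 by blast
lemma pentagon: "as W X (Y \<odot> Z) \<bullet> as (W \<odot> X) Y Z
   = (Id W \<otimes> as X Y Z) \<bullet> (as W (X \<odot> Y) Z \<bullet> (as W X Y \<otimes> Id Z))"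
  using B14 by blast
lemma triangle: "(Id X \<otimes> lu0 Y) \<bullet> as X I Y = ru0 X \<otimes> Id Y"
  using B15 by blast
lemma sg_hom: "sg X Y \<in> hom C (X \<odot> Y) (Y \<odot> X)" and sg_iso: "is_iso C (sg X Y)"
  using B16 by blast+
lemma sg_nat0: "Arr f \<Longrightarrow> Arr g \<Longrightarrow> sg (Cd f) (Cd g) \<bullet> (f \<otimes> g) = (g \<otimes> f) \<bullet> sg (Dm f) (Dm g)"
  using B17 by blast
lemma hex1: "as Y Z X \<bullet> (sg X (Y \<odot> Z) \<bullet> as X Y Z)
        = (Id Y \<otimes> sg X Z) \<bullet> (as Y X Z \<bullet> (sg X Y \<otimes> Id Z))"
  using B18 by blast
lemma hex2: "as' Z X Y \<bullet> (sg (X \<odot> Y) Z \<bullet> as' X Y Z)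
        = (sg X Z \<otimes> Id Y) \<bullet> (as' X Z Y \<bullet> (Id X \<otimes> sg Y Z))"
  using B19 by blast

lemma inv_props: assumes "is_iso C f"
  shows "inv_arr C f \<in> hom C (Cd f) (Dm f)" "inv_arr C f \<bullet> f = Id (Dm f)" "f \<bullet> inv_arr C f = Id (Cd f)"
proof -
  from assms obtain g where "g \<in> hom C (cd C f) (dm C f) \<and> cmp C g f = idt C (dm C f) \<and> cmp C f g = idt C (cd C f)"
    unfolding is_iso_def by blast
  hence "inv_arr C f \<in> hom C (cd C f) (dm C f) \<and> cmp C (inv_arr C f) f = idt C (dm C f) \<and> cmp C f (inv_arr C f) = idt C (cd C f)"
    unfolding inv_arr_def by (rule someI)
  thus "inv_arr C f \<in> hom C (Cd f) (Dm f)" "inv_arr C f \<bullet> f = Id (Dm f)" "f \<bullet> inv_arr C f = Id (Cd f)" by auto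
qed

lemma homD: "f \<in> hom C X Y \<Longrightarrow> Arr f" "f \<in> hom C X Y \<Longrightarrow> Dm f = X" "f \<in> hom C X Y \<Longrightarrow> Cd f = Y"
  unfolding hom_def by auto

lemma ty_id[simp]: "Arr (Id X)" "Dm (Id X) = X" "Cd (Id X) = X" using id_hom[of X] homD by auto
lemma ty_comp[simp]: "Arr f \<Longrightarrow> Arr g \<Longrightarrow> Cd f = Dm g \<Longrightarrow> Arr (g \<bullet> f)"
  "Arr f \<Longrightarrow> Arr g \<Longrightarrow> Cd f = Dm g \<Longrightarrow> Dm (g \<bullet> f) = Dm f"
  "Arr f \<Longrightarrow> Arr g \<Longrightarrow> Cd f = Dm g \<Longrightarrow> Cd (g \<bullet> f) = Cd g"
  using comp_hom0 homD by blast+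
lemma ty_tens[simp]: "Arr f \<Longrightarrow> Arr g \<Longrightarrow> Arr (f \<otimes> g)"
  "Arr f \<Longrightarrow> Arr g \<Longrightarrow> Dm (f \<otimes> g) = Dm f \<odot> Dm g"
  "Arr f \<Longrightarrow> Arr g \<Longrightarrow> Cd (f \<otimes> g) = Cd f \<odot> Cd g"
  using tens_hom0 homD by blast+
lemma ty_as[simp]: "Arr (as X Y Z)" "Dm (as X Y Z) = (X \<odot> Y) \<odot> Z" "Cd (as X Y Z) = X \<odot> (Y \<odot> Z)"
  using as_hom homD by blast+
lemma ty_as'[simp]: "Arr (as' X Y Z)" "Dm (as' X Y Z) = X \<odot> (Y \<odot> Z)" "Cd (as' X Y Z) = (X \<odot> Y) \<odot> Z"
  using inv_props(1)[OF as_iso] homD ty_as by metis+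
lemma ty_lu[simp]: "Arr (lu0 X)" "Dm (lu0 X) = I \<odot> X" "Cd (lu0 X) = X"
  using lu_hom homD by blast+
lemma ty_lu'[simp]: "Arr (lu' X)" "Dm (lu' X) = X" "Cd (lu' X) = I \<odot> X"
  using inv_props(1)[OF lu_iso] homD ty_lu by metis+
lemma ty_ru[simp]: "Arr (ru0 X)" "Dm (ru0 X) = X \<odot> I" "Cd (ru0 X) = X"
  using ru_hom homD by blast+
lemma ty_ru'[simp]: "Arr (ru' X)" "Dm (ru' X) = X" "Cd (ru' X) = X \<odot> I"
  using inv_props(1)[OF ru_iso] homD ty_ru by metis+
lemma ty_sg[simp]: "Arr (sg X Y)" "Dm (sg X Y) = X \<odot> Y" "Cd (sg X Y) = Y \<odot> X"
  using sg_hom homD by blast+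
lemma ty_sg'[simp]: "Arr (sg' X Y)" "Dm (sg' X Y) = Y \<odot> X" "Cd (sg' X Y) = X \<odot> Y"
  using inv_props(1)[OF sg_iso] homD ty_sg by metis+

lemma iso_cancel:
  assumes "is_iso C f"
  shows "f \<bullet> inv_arr C f = Id (Cd f)" "inv_arr C f \<bullet> f = Id (Dm f)"
    "Arr k \<Longrightarrow> Cd k = Cd f \<Longrightarrow> f \<bullet> (inv_arr C f \<bullet> k) = k"
    "Arr k \<Longrightarrow> Cd k = Dm f \<Longrightarrow> inv_arr C f \<bullet> (f \<bullet> k) = k"
proof -
  have f: "Arr f" using assms unfolding is_iso_def by blast
  have g: "Arr (inv_arr C f)" "Dm (inv_arr C f) = Cd f" "Cd (inv_arr C f) = Dm f"
    using homD[OF inv_props(1)[OF assms]] by auto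
  show 1: "f \<bullet> inv_arr C f = Id (Cd f)" "inv_arr C f \<bullet> f = Id (Dm f)" using inv_props[OF assms] by auto
  show "Arr k \<Longrightarrow> Cd k = Cd f \<Longrightarrow> f \<bullet> (inv_arr C f \<bullet> k) = k"
  proof -
    assume k: "Arr k" "Cd k = Cd f"
    have "f \<bullet> (inv_arr C f \<bullet> k) = (f \<bullet> inv_arr C f) \<bullet> k"
      using assoc0[OF k(1) g(1) f k(2)[folded g(2)] g(3)] .
    also have "\<dots> = k" using 1 idl0[of k] k by (simp only:)
    finally show ?thesis .
  qed
  show "Arr k \<Longrightarrow> Cd k = Dm f \<Longrightarrow> inv_arr C f \<bullet> (f \<bullet> k) = k"
  proof -
    assume k: "Arr k" "Cd k = Dm f"
    have "inv_arr C f \<bullet> (f \<bullet> k) = (inv_arr C f \<bullet> f) \<bullet> k"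
      using assoc0[OF k(1) f g(1) k(2) g(2)[symmetric]] .
    also have "\<dots> = k" using 1 idl0[of k] k by (simp only:)
    finally show ?thesis .
  qed
qed

lemma cassoc[simp]: "Arr f \<Longrightarrow> Arr g \<Longrightarrow> Arr h \<Longrightarrow> Cd f = Dm g \<Longrightarrow> Cd g = Dm h \<Longrightarrow>
   (h \<bullet> g) \<bullet> f = h \<bullet> (g \<bullet> f)" using assoc0[of f g h] by simp
lemma idl[simp]: "Arr f \<Longrightarrow> Cd f = X \<Longrightarrow> Id X \<bullet> f = f" using idl0 by blast
lemma idr[simp]: "Arr f \<Longrightarrow> Dm f = X \<Longrightarrow> f \<bullet> Id X = f" using idr0 by blast
declare tid[simp]
lemma merge[simp]: "Arr f \<Longrightarrow> Arr g \<Longrightarrow> Arr f' \<Longrightarrow> Arr g' \<Longrightarrow> Cd f = Dm g \<Longrightarrow> Cd f' = Dm g' \<Longrightarrow>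
  (g \<otimes> g') \<bullet> (f \<otimes> f') = (g \<bullet> f) \<otimes> (g' \<bullet> f')" using interchange0[of f g f' g'] by simp
lemma merge2[simp]: "Arr f \<Longrightarrow> Arr g \<Longrightarrow> Arr f' \<Longrightarrow> Arr g' \<Longrightarrow> Arr k \<Longrightarrow> Cd f = Dm g \<Longrightarrow> Cd f' = Dm g' \<Longrightarrow>
  Cd k = Dm f \<odot> Dm f' \<Longrightarrow>
  (g \<otimes> g') \<bullet> ((f \<otimes> f') \<bullet> k) = ((g \<bullet> f) \<otimes> (g' \<bullet> f')) \<bullet> k"
proof -
  assume a: "Arr f" "Arr g" "Arr f'" "Arr g'" "Arr k" "Cd f = Dm g" "Cd f' = Dm g'" "Cd k = Dm f \<odot> Dm f'"
  have 1: "(g \<otimes> g') \<bullet> ((f \<otimes> f') \<bullet> k) = ((g \<otimes> g') \<bullet> (f \<otimes> f')) \<bullet> k"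
    by (rule assoc0) (use a in simp_all)
  have 2: "(g \<bullet> f) \<otimes> (g' \<bullet> f') = (g \<otimes> g') \<bullet> (f \<otimes> f')" by (rule interchange0) (use a in simp_all)
  show ?thesis by (simp only: 1 2)
qed

lemma canc_as[simp]: "as X Y Z \<bullet> as' X Y Z = Id (X \<odot> (Y \<odot> Z))" "as' X Y Z \<bullet> as X Y Z = Id ((X \<odot> Y) \<odot> Z)"
   "Arr k \<Longrightarrow> Cd k = X \<odot> (Y \<odot> Z) \<Longrightarrow> as X Y Z \<bullet> (as' X Y Z \<bullet> k) = k"
   "Arr k \<Longrightarrow> Cd k = (X \<odot> Y) \<odot> Z \<Longrightarrow> as' X Y Z \<bullet> (as X Y Z \<bullet> k) = k"
  using iso_cancel[OF as_iso[of X Y Z]] by simp_all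
lemma canc_lu[simp]: "lu0 X \<bullet> lu' X = Id X" "lu' X \<bullet> lu0 X = Id (I \<odot> X)"
   "Arr k \<Longrightarrow> Cd k = X \<Longrightarrow> lu0 X \<bullet> (lu' X \<bullet> k) = k"
   "Arr k \<Longrightarrow> Cd k = I \<odot> X \<Longrightarrow> lu' X \<bullet> (lu0 X \<bullet> k) = k"
  using iso_cancel[OF lu_iso[of X]] by simp_all
lemma canc_ru[simp]: "ru0 X \<bullet> ru' X = Id X" "ru' X \<bullet> ru0 X = Id (X \<odot> I)"
   "Arr k \<Longrightarrow> Cd k = X \<Longrightarrow> ru0 X \<bullet> (ru' X \<bullet> k) = k"
   "Arr k \<Longrightarrow> Cd k = X \<odot> I \<Longrightarrow> ru' X \<bullet> (ru0 X \<bullet> k) = k"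
  using iso_cancel[OF ru_iso[of X]] by simp_all
lemma canc_sg[simp]: "sg X Y \<bullet> sg' X Y = Id (Y \<odot> X)" "sg' X Y \<bullet> sg X Y = Id (X \<odot> Y)"
   "Arr k \<Longrightarrow> Cd k = Y \<odot> X \<Longrightarrow> sg X Y \<bullet> (sg' X Y \<bullet> k) = k"
   "Arr k \<Longrightarrow> Cd k = X \<odot> Y \<Longrightarrow> sg' X Y \<bullet> (sg X Y \<bullet> k) = k"
  using iso_cancel[OF sg_iso[of X Y]] by simp_all

end

context BMC begin

lemma faith_r: assumes "Arr f" "Arr g" "Dm f = Dm g" "Cd f = Cd g" "f \<otimes> Id I = g \<otimes> Id I"
  shows "f = g"
proof -
  have "f = (f \<bullet> ru0 (Dm f)) \<bullet> ru' (Dm f)" using assms by simp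
  also have "\<dots> = ru0 (Cd f) \<bullet> (f \<otimes> Id I) \<bullet> ru' (Dm f)" using ru_nat0[of f] assms by simp
  also have "\<dots> = ru0 (Cd g) \<bullet> (g \<otimes> Id I) \<bullet> ru' (Dm g)" using assms by simp
  also have "\<dots> = (g \<bullet> ru0 (Dm g)) \<bullet> ru' (Dm g)" using ru_nat0[of g] assms by simp
  also have "\<dots> = g" using assms by simp
  finally show ?thesis .
qed

lemma faith_l: assumes "Arr f" "Arr g" "Dm f = Dm g" "Cd f = Cd g" "Id I \<otimes> f = Id I \<otimes> g"
  shows "f = g"
proof -
  have "f = (f \<bullet> lu0 (Dm f)) \<bullet> lu' (Dm f)" using assms by simp
  also have "\<dots> = lu0 (Cd f) \<bullet> (Id I \<otimes> f) \<bullet> lu' (Dm f)" using lu_nat0[of f] assms by simp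
  also have "\<dots> = lu0 (Cd g) \<bullet> (Id I \<otimes> g) \<bullet> lu' (Dm g)" using assms by simp
  also have "\<dots> = (g \<bullet> lu0 (Dm g)) \<bullet> lu' (Dm g)" using lu_nat0[of g] assms by simp
  also have "\<dots> = g" using assms by simp
  finally show ?thesis .
qed

lemma tail: "a \<bullet> b = c \<bullet> d \<Longrightarrow> Arr k \<Longrightarrow> Arr b \<Longrightarrow> Arr a \<Longrightarrow> Arr c \<Longrightarrow> Arr d \<Longrightarrow>
   Cd k = Dm b \<Longrightarrow> Cd b = Dm a \<Longrightarrow> Cd d = Dm c \<Longrightarrow> Dm d = Dm b \<Longrightarrow> a \<bullet> (b \<bullet> k) = c \<bullet> (d \<bullet> k)"
proof -
  assume h: "a \<bullet> b = c \<bullet> d" "Arr k" "Arr b" "Arr a" "Arr c" "Arr d"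
   "Cd k = Dm b" "Cd b = Dm a" "Cd d = Dm c" "Dm d = Dm b"
  have "a \<bullet> (b \<bullet> k) = (a \<bullet> b) \<bullet> k" by (rule cassoc[symmetric]) (use h in auto)
  also have "\<dots> = (c \<bullet> d) \<bullet> k" by (simp only: h(1))
  also have "\<dots> = c \<bullet> (d \<bullet> k)" by (rule cassoc) (use h in auto)
  finally show ?thesis .
qed

lemma tail1: "a \<bullet> b = c \<Longrightarrow> Arr k \<Longrightarrow> Arr b \<Longrightarrow> Arr a \<Longrightarrow>
   Cd k = Dm b \<Longrightarrow> Cd b = Dm a \<Longrightarrow> a \<bullet> (b \<bullet> k) = c \<bullet> k"
proof -
  assume h: "a \<bullet> b = c" "Arr k" "Arr b" "Arr a" "Cd k = Dm b" "Cd b = Dm a"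
  have "a \<bullet> (b \<bullet> k) = (a \<bullet> b) \<bullet> k" by (rule cassoc[symmetric]) (use h in auto)
  also have "\<dots> = c \<bullet> k" by (simp only: h(1))
  finally show ?thesis .
qed

lemma as_mono: "as a b c \<bullet> x = as a b c \<bullet> y \<Longrightarrow> Arr x \<Longrightarrow> Arr y \<Longrightarrow> Cd x = (a \<odot> b) \<odot> c \<Longrightarrow>
   Cd y = (a \<odot> b) \<odot> c \<Longrightarrow> x = y"
proof -
  assume h: "as a b c \<bullet> x = as a b c \<bullet> y" "Arr x" "Arr y" "Cd x = (a \<odot> b) \<odot> c" "Cd y = (a \<odot> b) \<odot> c"
  have "x = as' a b c \<bullet> (as a b c \<bullet> x)" using canc_as(4)[of x a b c] h by simp
  also have "\<dots> = as' a b c \<bullet> (as a b c \<bullet> y)" by (simp only: h(1))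
  also have "\<dots> = y" using canc_as(4)[of y a b c] h by simp
  finally show ?thesis .
qed
lemma as'_mono: "as' a b c \<bullet> x = as' a b c \<bullet> y \<Longrightarrow> Arr x \<Longrightarrow> Arr y \<Longrightarrow> Cd x = a \<odot> (b \<odot> c) \<Longrightarrow>
   Cd y = a \<odot> (b \<odot> c) \<Longrightarrow> x = y"
proof -
  assume h: "as' a b c \<bullet> x = as' a b c \<bullet> y" "Arr x" "Arr y" "Cd x = a \<odot> (b \<odot> c)" "Cd y = a \<odot> (b \<odot> c)"
  have "x = as a b c \<bullet> (as' a b c \<bullet> x)" using canc_as(3)[of x a b c] h by simp
  also have "\<dots> = as a b c \<bullet> (as' a b c \<bullet> y)" by (simp only: h(1))
  also have "\<dots> = y" using canc_as(3)[of y a b c] h by simp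
  finally show ?thesis .
qed

lemma KA: "(Id a \<otimes> ru0 b) \<bullet> as a b I = ru0 (a \<odot> b)"
proof -
  have tri: "ru0 X \<otimes> Id Y = (Id X \<otimes> lu0 Y) \<bullet> as X I Y" for X Y using triangle by simp
  have n1: "as a b I \<bullet> (Id (a \<odot> b) \<otimes> lu0 I) = (Id a \<otimes> (Id b \<otimes> lu0 I)) \<bullet> as a b (I \<odot> I)"
    using as_nat0[of "Id a" "Id b" "lu0 I"] by simp
  have n2: "as a b I \<bullet> ((Id a \<otimes> ru0 b) \<otimes> Id I) = (Id a \<otimes> (ru0 b \<otimes> Id I)) \<bullet> as a (b \<odot> I) I"
    using as_nat0[of "Id a" "ru0 b" "Id I"] by simp
  have "as a b I \<bullet> (ru0 (a \<odot> b) \<otimes> Id I) = as a b I \<bullet> ((Id (a \<odot> b) \<otimes> lu0 I) \<bullet> as (a \<odot> b) I I)"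
    by (simp add: tri)
  also have "\<dots> = (Id a \<otimes> (Id b \<otimes> lu0 I)) \<bullet> (as a b (I \<odot> I) \<bullet> as (a \<odot> b) I I)"
    by (simp add: n1[THEN tail])
  also have "\<dots> = (Id a \<otimes> (Id b \<otimes> lu0 I)) \<bullet> ((Id a \<otimes> as b I I) \<bullet> (as a (b \<odot> I) I \<bullet> (as a b I \<otimes> Id I)))"
    by (simp add: pentagon)
  also have "\<dots> = (Id a \<otimes> (ru0 b \<otimes> Id I)) \<bullet> (as a (b \<odot> I) I \<bullet> (as a b I \<otimes> Id I))"
    by (simp add: triangle)
  also have "\<dots> = as a b I \<bullet> (((Id a \<otimes> ru0 b) \<otimes> Id I) \<bullet> (as a b I \<otimes> Id I))"
    by (simp add: n2[symmetric, THEN tail])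
  also have "\<dots> = as a b I \<bullet> (((Id a \<otimes> ru0 b) \<bullet> as a b I) \<otimes> Id I)"
    by simp
  finally have "ru0 (a \<odot> b) \<otimes> Id I = ((Id a \<otimes> ru0 b) \<bullet> as a b I) \<otimes> Id I"
    by (rule as_mono) simp_all
  from faith_r[OF _ _ _ _ this] show ?thesis by simp
qed

lemma epi: "x \<bullet> p = y \<bullet> p \<Longrightarrow> p \<bullet> q = Id (Dm x) \<Longrightarrow> Arr x \<Longrightarrow> Arr y \<Longrightarrow> Arr p \<Longrightarrow> Arr q \<Longrightarrow>
   Cd p = Dm x \<Longrightarrow> Cd p = Dm y \<Longrightarrow> Cd q = Dm p \<Longrightarrow> x = y"
proof -
  assume h: "x \<bullet> p = y \<bullet> p" "p \<bullet> q = Id (Dm x)" "Arr x" "Arr y" "Arr p" "Arr q"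
   "Cd p = Dm x" "Cd p = Dm y" "Cd q = Dm p"
  have "x = x \<bullet> (p \<bullet> q)" using h by simp
  also have "\<dots> = (x \<bullet> p) \<bullet> q" by (rule cassoc[symmetric]) (use h in auto)
  also have "\<dots> = (y \<bullet> p) \<bullet> q" by (simp only: h(1))
  also have "\<dots> = y \<bullet> (p \<bullet> q)" by (rule cassoc) (use h in auto)
  also have "\<dots> = y" using h by simp
  finally show ?thesis .
qed

lemma mono: "p \<bullet> x = p \<bullet> y \<Longrightarrow> q \<bullet> p = Id (Cd x) \<Longrightarrow> Arr x \<Longrightarrow> Arr y \<Longrightarrow> Arr p \<Longrightarrow> Arr q \<Longrightarrow>
   Dm p = Cd x \<Longrightarrow> Dm p = Cd y \<Longrightarrow> Dm q = Cd p \<Longrightarrow> x = y"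
proof -
  assume h: "p \<bullet> x = p \<bullet> y" "q \<bullet> p = Id (Cd x)" "Arr x" "Arr y" "Arr p" "Arr q"
   "Dm p = Cd x" "Dm p = Cd y" "Dm q = Cd p"
  have "x = (q \<bullet> p) \<bullet> x" using h by simp
  also have "\<dots> = q \<bullet> (p \<bullet> x)" by (rule cassoc) (use h in auto)
  also have "\<dots> = q \<bullet> (p \<bullet> y)" by (simp only: h(1))
  also have "\<dots> = (q \<bullet> p) \<bullet> y" by (rule cassoc[symmetric]) (use h in auto)
  also have "\<dots> = y" using h by simp
  finally show ?thesis .
qed

lemma KB: "lu0 (a \<odot> b) \<bullet> as I a b = lu0 a \<otimes> Id b"
proof -
  have tri: "ru0 X \<otimes> Id Y = (Id X \<otimes> lu0 Y) \<bullet> as X I Y" for X Y using triangle by simp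
  have n1: "(ru0 I \<otimes> Id (a \<odot> b)) \<bullet> as (I \<odot> I) a b = as I a b \<bullet> ((ru0 I \<otimes> Id a) \<otimes> Id b)"
    using as_nat0[of "ru0 I" "Id a" "Id b"] by simp
  have n2: "as I a b \<bullet> ((Id I \<otimes> lu0 a) \<otimes> Id b) = (Id I \<otimes> (lu0 a \<otimes> Id b)) \<bullet> as I (I \<odot> a) b"
    using as_nat0[of "Id I" "lu0 a" "Id b"] by simp
  have "(Id I \<otimes> (lu0 (a \<odot> b) \<bullet> as I a b)) \<bullet> (as I (I \<odot> a) b \<bullet> (as I I a \<otimes> Id b))
      = (Id I \<otimes> lu0 (a \<odot> b)) \<bullet> (as I I (a \<odot> b) \<bullet> as (I \<odot> I) a b)"
    by (simp add: pentagon)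
  also have "\<dots> = (ru0 I \<otimes> Id (a \<odot> b)) \<bullet> as (I \<odot> I) a b"
    by (simp add: triangle[THEN tail1])
  also have "\<dots> = as I a b \<bullet> ((ru0 I \<otimes> Id a) \<otimes> Id b)" by (rule n1)
  also have "\<dots> = as I a b \<bullet> ((Id I \<otimes> lu0 a) \<otimes> Id b) \<bullet> (as I I a \<otimes> Id b)"
    by (simp add: tri)
  also have "\<dots> = (Id I \<otimes> (lu0 a \<otimes> Id b)) \<bullet> (as I (I \<odot> a) b \<bullet> (as I I a \<otimes> Id b))"
    by (simp add: n2[symmetric, THEN tail])
  finally have "Id I \<otimes> (lu0 (a \<odot> b) \<bullet> as I a b) = Id I \<otimes> (lu0 a \<otimes> Id b)"
    by (rule epi[where q = "(as' I I a \<otimes> Id b) \<bullet> as' I (I \<odot> a) b"]) simp_all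
  from faith_l[OF _ _ _ _ this] show ?thesis by simp
qed

lemma KA': "ru0 (a \<odot> b) \<bullet> as' a b I = Id a \<otimes> ru0 b"
  by (simp add: KA[symmetric])
lemma KB': "(lu0 a \<otimes> Id b) \<bullet> as' I a b = lu0 (a \<odot> b)"
  by (simp add: KB[symmetric])
lemma tri': "(ru0 X \<otimes> Id Y) \<bullet> as' X I Y = Id X \<otimes> lu0 Y"
  by (simp add: triangle[symmetric])

lemma LI: "lu0 (I \<odot> I) = Id I \<otimes> lu0 I"
proof -
  have "lu0 I \<bullet> lu0 (I \<odot> I) = lu0 I \<bullet> (Id I \<otimes> lu0 I)" using lu_nat0[of "lu0 I"] by simp
  thus ?thesis by (rule mono[where q = "lu' I"]) simp_all
qed

lemma LR: "lu0 I = ru0 I"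
proof -
  have "ru0 I \<otimes> Id I = lu0 I \<otimes> Id I"
    using triangle[of I I] KB[of I I] LI by simp
  from faith_r[OF _ _ _ _ this] show ?thesis by simp
qed

lemma BU1: "lu0 a \<bullet> sg a I = ru0 a"
proof -
  have h: "as I I a \<bullet> (sg a (I \<odot> I) \<bullet> as a I I)
        = (Id I \<otimes> sg a I) \<bullet> (as I a I \<bullet> (sg a I \<otimes> Id I))" by (rule hex1)
  have n1: "sg a I \<bullet> (Id a \<otimes> lu0 I) = (lu0 I \<otimes> Id a) \<bullet> sg a (I \<odot> I)"
    using sg_nat0[of "Id a" "lu0 I"] by simp
  have n2: "lu0 (I \<odot> a) \<bullet> (Id I \<otimes> sg a I) = sg a I \<bullet> lu0 (a \<odot> I)"
    using lu_nat0[of "sg a I"] by simp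
  have "sg a I \<bullet> (ru0 a \<otimes> Id I) = sg a I \<bullet> ((Id a \<otimes> lu0 I) \<bullet> as a I I)"
    by (simp add: triangle)
  also have "\<dots> = (lu0 I \<otimes> Id a) \<bullet> (sg a (I \<odot> I) \<bullet> as a I I)"
    by (simp add: n1[THEN tail])
  also have "\<dots> = lu0 (I \<odot> a) \<bullet> (as I I a \<bullet> (sg a (I \<odot> I) \<bullet> as a I I))"
    by (simp add: KB[THEN tail1])
  also have "\<dots> = lu0 (I \<odot> a) \<bullet> ((Id I \<otimes> sg a I) \<bullet> (as I a I \<bullet> (sg a I \<otimes> Id I)))"
    by (simp only: h)
  also have "\<dots> = sg a I \<bullet> (lu0 (a \<odot> I) \<bullet> (as I a I \<bullet> (sg a I \<otimes> Id I)))"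
    by (simp add: n2[THEN tail])
  also have "\<dots> = sg a I \<bullet> ((lu0 a \<bullet> sg a I) \<otimes> Id I)"
    by (simp add: KB[THEN tail1])
  finally have "ru0 a \<otimes> Id I = (lu0 a \<bullet> sg a I) \<otimes> Id I"
    by (rule mono[where q = "sg' a I"]) simp_all
  from faith_r[OF _ _ _ _ this] show ?thesis by simp
qed

lemma BU2: "ru0 a \<bullet> sg I a = lu0 a"
proof -
  have h: "as' a I I \<bullet> (sg (I \<odot> I) a \<bullet> as' I I a)
        = (sg I a \<otimes> Id I) \<bullet> (as' I a I \<bullet> (Id I \<otimes> sg I a))" by (rule hex2)
  have n1: "sg I a \<bullet> (ru0 I \<otimes> Id a) = (Id a \<otimes> ru0 I) \<bullet> sg (I \<odot> I) a"
    using sg_nat0[of "ru0 I" "Id a"] by simp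
  have n2: "ru0 (a \<odot> I) \<bullet> (sg I a \<otimes> Id I) = sg I a \<bullet> ru0 (I \<odot> a)"
    using ru_nat0[of "sg I a"] by simp
  have "sg I a \<bullet> (Id I \<otimes> lu0 a) = sg I a \<bullet> ((ru0 I \<otimes> Id a) \<bullet> as' I I a)"
    by (simp add: tri')
  also have "\<dots> = (Id a \<otimes> ru0 I) \<bullet> (sg (I \<odot> I) a \<bullet> as' I I a)"
    by (simp add: n1[THEN tail])
  also have "\<dots> = ru0 (a \<odot> I) \<bullet> (as' a I I \<bullet> (sg (I \<odot> I) a \<bullet> as' I I a))"
    by (simp add: KA'[THEN tail1])
  also have "\<dots> = ru0 (a \<odot> I) \<bullet> ((sg I a \<otimes> Id I) \<bullet> (as' I a I \<bullet> (Id I \<otimes> sg I a)))"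
    by (simp only: h)
  also have "\<dots> = sg I a \<bullet> (ru0 (I \<odot> a) \<bullet> (as' I a I \<bullet> (Id I \<otimes> sg I a)))"
    by (simp add: n2[THEN tail])
  also have "\<dots> = sg I a \<bullet> (Id I \<otimes> (ru0 a \<bullet> sg I a))"
    by (simp add: KA'[THEN tail1])
  finally have "Id I \<otimes> lu0 a = Id I \<otimes> (ru0 a \<bullet> sg I a)"
    by (rule mono[where q = "sg' I a"]) simp_all
  from faith_l[OF _ _ _ _ this] show ?thesis by simp
qed

end

context BMC begin

definition Xm where "Xm b c d = as c b d \<bullet> ((sg b c \<otimes> Id d) \<bullet> as' b c d)"

lemma ty_Xm[simp]: "Arr (Xm b c d)" "Dm (Xm b c d) = b \<odot> (c \<odot> d)" "Cd (Xm b c d) = c \<odot> (b \<odot> d)"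
  unfolding Xm_def by simp_all

lemma tail3: "a \<bullet> (b \<bullet> c) = d \<bullet> e \<Longrightarrow> Arr k \<Longrightarrow> Arr a \<Longrightarrow> Arr b \<Longrightarrow> Arr c \<Longrightarrow> Arr d \<Longrightarrow> Arr e \<Longrightarrow>
   Cd k = Dm c \<Longrightarrow> Cd c = Dm b \<Longrightarrow> Cd b = Dm a \<Longrightarrow> Cd e = Dm d \<Longrightarrow> Dm e = Dm c \<Longrightarrow>
   a \<bullet> (b \<bullet> (c \<bullet> k)) = d \<bullet> (e \<bullet> k)"
proof -
  assume h: "a \<bullet> (b \<bullet> c) = d \<bullet> e" "Arr k" "Arr a" "Arr b" "Arr c" "Arr d" "Arr e"
   "Cd k = Dm c" "Cd c = Dm b" "Cd b = Dm a" "Cd e = Dm d" "Dm e = Dm c"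
  have "a \<bullet> (b \<bullet> (c \<bullet> k)) = (a \<bullet> (b \<bullet> c)) \<bullet> k" using h(2-) by simp
  also have "\<dots> = (d \<bullet> e) \<bullet> k" by (simp only: h(1))
  also have "\<dots> = d \<bullet> (e \<bullet> k)" using h(2-) by simp
  finally show ?thesis .
qed

lemma tail4: "a \<bullet> (b \<bullet> (c \<bullet> d)) = e \<bullet> f \<Longrightarrow> Arr k \<Longrightarrow> Arr a \<Longrightarrow> Arr b \<Longrightarrow> Arr c \<Longrightarrow> Arr d \<Longrightarrow> Arr e \<Longrightarrow> Arr f \<Longrightarrow>
   Cd k = Dm d \<Longrightarrow> Cd d = Dm c \<Longrightarrow> Cd c = Dm b \<Longrightarrow> Cd b = Dm a \<Longrightarrow> Cd f = Dm e \<Longrightarrow> Dm f = Dm d \<Longrightarrow>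
   a \<bullet> (b \<bullet> (c \<bullet> (d \<bullet> k))) = e \<bullet> (f \<bullet> k)"
proof -
  assume h: "a \<bullet> (b \<bullet> (c \<bullet> d)) = e \<bullet> f" "Arr k" "Arr a" "Arr b" "Arr c" "Arr d" "Arr e" "Arr f"
   "Cd k = Dm d" "Cd d = Dm c" "Cd c = Dm b" "Cd b = Dm a" "Cd f = Dm e" "Dm f = Dm d"
  have "a \<bullet> (b \<bullet> (c \<bullet> (d \<bullet> k))) = (a \<bullet> (b \<bullet> (c \<bullet> d))) \<bullet> k" using h(2-) by simp
  also have "\<dots> = (e \<bullet> f) \<bullet> k" by (simp only: h(1))
  also have "\<dots> = e \<bullet> (f \<bullet> k)" using h(2-) by simp
  finally show ?thesis .
qed

lemmas TY = ty_id ty_comp ty_tens ty_as ty_as' ty_lu ty_lu' ty_ru ty_ru' ty_sg ty_sg' ty_Xm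

lemma as'_nat0: "Arr f \<Longrightarrow> Arr g \<Longrightarrow> Arr h \<Longrightarrow>
  as' (Cd f) (Cd g) (Cd h) \<bullet> (f \<otimes> (g \<otimes> h)) = ((f \<otimes> g) \<otimes> h) \<bullet> as' (Dm f) (Dm g) (Dm h)"
proof -
  assume h: "Arr f" "Arr g" "Arr h"
  have "as (Cd f) (Cd g) (Cd h) \<bullet> (as' (Cd f) (Cd g) (Cd h) \<bullet> (f \<otimes> (g \<otimes> h)))
      = as (Cd f) (Cd g) (Cd h) \<bullet> (((f \<otimes> g) \<otimes> h) \<bullet> as' (Dm f) (Dm g) (Dm h))"
    using h by (simp add: as_nat0[THEN tail1])
  thus ?thesis by (rule mono[where q = "as' (Cd f) (Cd g) (Cd h)"]) (use h in simp_all)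
qed

lemma pent_t: "Arr k \<Longrightarrow> Cd k = ((W \<odot> X) \<odot> Y) \<odot> Z \<Longrightarrow> as W X (Y \<odot> Z) \<bullet> (as (W \<odot> X) Y Z \<bullet> k)
   = (Id W \<otimes> as X Y Z) \<bullet> (as W (X \<odot> Y) Z \<bullet> ((as W X Y \<otimes> Id Z) \<bullet> k))"
  by (simp add: pentagon[THEN tail])

lemma pent_rev_t: "Arr k \<Longrightarrow> Cd k = ((W \<odot> X) \<odot> Y) \<odot> Z \<Longrightarrow>
   (Id W \<otimes> as X Y Z) \<bullet> (as W (X \<odot> Y) Z \<bullet> ((as W X Y \<otimes> Id Z) \<bullet> k)) = as W X (Y \<odot> Z) \<bullet> (as (W \<odot> X) Y Z \<bullet> k)"
  by (simp add: pent_t)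

lemma pent_v1: "as' W X (Y \<odot> Z) \<bullet> ((Id W \<otimes> as X Y Z) \<bullet> as W (X \<odot> Y) Z) = as (W \<odot> X) Y Z \<bullet> (as' W X Y \<otimes> Id Z)"
  by (rule mono[where p = "as W X (Y \<odot> Z)" and q = "as' W X (Y \<odot> Z)"]) (simp_all add: pent_t)

lemma pent_inv: "as' (W \<odot> X) Y Z \<bullet> as' W X (Y \<odot> Z) = (as' W X Y \<otimes> Id Z) \<bullet> (as' W (X \<odot> Y) Z \<bullet> (Id W \<otimes> as' X Y Z))"
proof -
  have "as W X (Y \<odot> Z) \<bullet> (as (W \<odot> X) Y Z \<bullet> ((as' W X Y \<otimes> Id Z) \<bullet> (as' W (X \<odot> Y) Z \<bullet> (Id W \<otimes> as' X Y Z))))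
     = Id (W \<odot> (X \<odot> (Y \<odot> Z)))" by (simp add: pent_t)
  hence "as W X (Y \<odot> Z) \<bullet> (as (W \<odot> X) Y Z \<bullet> ((as' W X Y \<otimes> Id Z) \<bullet> (as' W (X \<odot> Y) Z \<bullet> (Id W \<otimes> as' X Y Z))))
     = as W X (Y \<odot> Z) \<bullet> (as (W \<odot> X) Y Z \<bullet> (as' (W \<odot> X) Y Z \<bullet> as' W X (Y \<odot> Z)))" by simp
  hence "as (W \<odot> X) Y Z \<bullet> ((as' W X Y \<otimes> Id Z) \<bullet> (as' W (X \<odot> Y) Z \<bullet> (Id W \<otimes> as' X Y Z)))
     = as (W \<odot> X) Y Z \<bullet> (as' (W \<odot> X) Y Z \<bullet> as' W X (Y \<odot> Z))"
    by (rule mono[where q = "as' W X (Y \<odot> Z)"]) simp_all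
  hence "(as' W X Y \<otimes> Id Z) \<bullet> (as' W (X \<odot> Y) Z \<bullet> (Id W \<otimes> as' X Y Z))
     = as' (W \<odot> X) Y Z \<bullet> as' W X (Y \<odot> Z)"
    by (rule mono[where q = "as' (W \<odot> X) Y Z"]) simp_all
  thus ?thesis by simp
qed

lemma XB: "Xm b c (d \<odot> e) \<bullet> ((Id b \<otimes> as c d e) \<bullet> as b (c \<odot> d) e)
   = (Id c \<otimes> as b d e) \<bullet> (as c (b \<odot> d) e \<bullet> (Xm b c d \<otimes> Id e))"
proof -
  have n: "(sg b c \<otimes> Id (d \<odot> e)) \<bullet> as (b \<odot> c) d e = as (c \<odot> b) d e \<bullet> ((sg b c \<otimes> Id d) \<otimes> Id e)"
    using as_nat0[of "sg b c" "Id d" "Id e"] by simp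
  show ?thesis unfolding Xm_def
    by (simp add: pent_v1 n[THEN tail] pent_t)
qed

lemma pent_inv_t: "Arr k \<Longrightarrow> Cd k = W \<odot> (X \<odot> (Y \<odot> Z)) \<Longrightarrow>
   as' (W \<odot> X) Y Z \<bullet> (as' W X (Y \<odot> Z) \<bullet> k) = (as' W X Y \<otimes> Id Z) \<bullet> (as' W (X \<odot> Y) Z \<bullet> ((Id W \<otimes> as' X Y Z) \<bullet> k))"
  by (simp add: pent_inv[THEN tail])

lemma PV2: "as' W (X \<odot> Y) Z \<bullet> (Id W \<otimes> as' X Y Z) = (as W X Y \<otimes> Id Z) \<bullet> (as' (W \<odot> X) Y Z \<bullet> as' W X (Y \<odot> Z))"
  by (simp add: pent_inv)

lemma HX1: "sg X (Y \<odot> Z) \<bullet> as X Y Z = as' Y Z X \<bullet> ((Id Y \<otimes> sg X Z) \<bullet> (as Y X Z \<bullet> (sg X Y \<otimes> Id Z)))"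
proof -
  have "as Y Z X \<bullet> (sg X (Y \<odot> Z) \<bullet> as X Y Z) = as Y Z X \<bullet> (as' Y Z X \<bullet> ((Id Y \<otimes> sg X Z) \<bullet> (as Y X Z \<bullet> (sg X Y \<otimes> Id Z))))"
    using hex1 by simp
  thus ?thesis by (rule mono[where q = "as' Y Z X"]) simp_all
qed

lemma XC: "as c c' (b \<odot> d) \<bullet> (Xm b (c \<odot> c') d \<bullet> (Id b \<otimes> as' c c' d)) = (Id c \<otimes> Xm b c' d) \<bullet> Xm b c (c' \<odot> d)"
proof -
  have "as c c' (b \<odot> d) \<bullet> (Xm b (c \<odot> c') d \<bullet> (Id b \<otimes> as' c c' d))
     = as c c' (b \<odot> d) \<bullet> (as (c \<odot> c') b d \<bullet> ((sg b (c \<odot> c') \<otimes> Id d) \<bullet> (as' b (c \<odot> c') d \<bullet> (Id b \<otimes> as' c c' d))))"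
    unfolding Xm_def by simp
  also have "\<dots> = as c c' (b \<odot> d) \<bullet> (as (c \<odot> c') b d \<bullet> ((sg b (c \<odot> c') \<otimes> Id d) \<bullet> ((as b c c' \<otimes> Id d) \<bullet> (as' (b \<odot> c) c' d \<bullet> as' b c (c' \<odot> d)))))"
    by (simp add: PV2)
  also have "\<dots> = as c c' (b \<odot> d) \<bullet> (as (c \<odot> c') b d \<bullet> (((as' c c' b \<bullet> ((Id c \<otimes> sg b c') \<bullet> (as c b c' \<bullet> (sg b c \<otimes> Id c')))) \<otimes> Id d) \<bullet> (as' (b \<odot> c) c' d \<bullet> as' b c (c' \<odot> d))))"
    by (simp add: HX1)
  also have "\<dots> = (Id c \<otimes> as c' b d) \<bullet> (as c (c' \<odot> b) d \<bullet> ((((Id c \<otimes> sg b c') \<bullet> (as c b c' \<bullet> (sg b c \<otimes> Id c'))) \<otimes> Id d) \<bullet> (as' (b \<odot> c) c' d \<bullet> as' b c (c' \<odot> d))))"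
    by (simp add: pent_t)
  also have "\<dots> = (Id c \<otimes> as c' b d) \<bullet> (as c (c' \<odot> b) d \<bullet> (((Id c \<otimes> sg b c') \<otimes> Id d) \<bullet> ((as c b c' \<otimes> Id d) \<bullet> (((sg b c \<otimes> Id c') \<otimes> Id d) \<bullet> (as' (b \<odot> c) c' d \<bullet> as' b c (c' \<odot> d))))))"
    by simp
  also have "\<dots> = (Id c \<otimes> as c' b d) \<bullet> ((Id c \<otimes> (sg b c' \<otimes> Id d)) \<bullet> (as c (b \<odot> c') d \<bullet> ((as c b c' \<otimes> Id d) \<bullet> (as' (c \<odot> b) c' d \<bullet> ((sg b c \<otimes> Id (c' \<odot> d)) \<bullet> as' b c (c' \<odot> d))))))"
  proof -
    have n1: "as c (c' \<odot> b) d \<bullet> ((Id c \<otimes> sg b c') \<otimes> Id d) = (Id c \<otimes> (sg b c' \<otimes> Id d)) \<bullet> as c (b \<odot> c') d"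
      using as_nat0[of "Id c" "sg b c'" "Id d"] by simp
    have n2: "((sg b c \<otimes> Id c') \<otimes> Id d) \<bullet> as' (b \<odot> c) c' d = as' (c \<odot> b) c' d \<bullet> (sg b c \<otimes> Id (c' \<odot> d))"
      using as'_nat0[of "sg b c" "Id c'" "Id d"] by simp
    show ?thesis
      by (simp only: n1[THEN tail] n2[THEN tail] TY, (simp)?)
  qed
  also have "\<dots> = (Id c \<otimes> as c' b d) \<bullet> ((Id c \<otimes> (sg b c' \<otimes> Id d)) \<bullet> ((Id c \<otimes> as' b c' d) \<bullet> (as c b (c' \<odot> d) \<bullet> ((sg b c \<otimes> Id (c' \<odot> d)) \<bullet> as' b c (c' \<odot> d)))))"
  proof -
    have p: "as c (b \<odot> c') d \<bullet> ((as c b c' \<otimes> Id d) \<bullet> as' (c \<odot> b) c' d) = (Id c \<otimes> as' b c' d) \<bullet> as c b (c' \<odot> d)"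
      by (rule mono[where p = "Id c \<otimes> as b c' d" and q = "Id c \<otimes> as' b c' d"]) (simp_all add: pent_rev_t)
    show ?thesis by (simp only: p[THEN tail3] TY, (simp)?)
  qed
  also have "\<dots> = (Id c \<otimes> Xm b c' d) \<bullet> Xm b c (c' \<odot> d)"
    unfolding Xm_def by simp
  finally show ?thesis .
qed

lemma HX2: "sg (X \<odot> Y) Z \<bullet> as' X Y Z = as Z X Y \<bullet> ((sg X Z \<otimes> Id Y) \<bullet> (as' X Z Y \<bullet> (Id X \<otimes> sg Y Z)))"
proof -
  have "as' Z X Y \<bullet> (sg (X \<odot> Y) Z \<bullet> as' X Y Z) = as' Z X Y \<bullet> (as Z X Y \<bullet> ((sg X Z \<otimes> Id Y) \<bullet> (as' X Z Y \<bullet> (Id X \<otimes> sg Y Z))))"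
    using hex2 by simp
  thus ?thesis by (rule mono[where q = "as Z X Y"]) simp_all
qed

lemma XD: "(Id c \<otimes> as b b' d) \<bullet> (Xm (b \<odot> b') c d \<bullet> as' b b' (c \<odot> d)) = Xm b c (b' \<odot> d) \<bullet> (Id b \<otimes> Xm b' c d)"
proof -
  have "(Id c \<otimes> as b b' d) \<bullet> (Xm (b \<odot> b') c d \<bullet> as' b b' (c \<odot> d))
     = (Id c \<otimes> as b b' d) \<bullet> (as c (b \<odot> b') d \<bullet> ((sg (b \<odot> b') c \<otimes> Id d) \<bullet> (as' (b \<odot> b') c d \<bullet> as' b b' (c \<odot> d))))"
    unfolding Xm_def by simp
  also have "\<dots> = (Id c \<otimes> as b b' d) \<bullet> (as c (b \<odot> b') d \<bullet> (((sg (b \<odot> b') c \<bullet> as' b b' c) \<otimes> Id d) \<bullet> (as' b (b' \<odot> c) d \<bullet> (Id b \<otimes> as' b' c d))))"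
    by (simp add: pent_inv pent_inv_t)
  also have "\<dots> = (Id c \<otimes> as b b' d) \<bullet> (as c (b \<odot> b') d \<bullet> ((as c b b' \<otimes> Id d) \<bullet> (((sg b c \<otimes> Id b') \<bullet> (as' b c b' \<bullet> (Id b \<otimes> sg b' c))) \<otimes> Id d) \<bullet> (as' b (b' \<odot> c) d \<bullet> (Id b \<otimes> as' b' c d))))"
    by (simp add: HX2)
  also have "\<dots> = as c b (b' \<odot> d) \<bullet> (as (c \<odot> b) b' d \<bullet> (((sg b c \<otimes> Id b') \<bullet> (as' b c b' \<bullet> (Id b \<otimes> sg b' c))) \<otimes> Id d) \<bullet> (as' b (b' \<odot> c) d \<bullet> (Id b \<otimes> as' b' c d)))"
    by (simp only: pent_rev_t TY, (simp)?)
  also have "\<dots> = as c b (b' \<odot> d) \<bullet> (as (c \<odot> b) b' d \<bullet> (((sg b c \<otimes> Id b') \<otimes> Id d) \<bullet> ((as' b c b' \<otimes> Id d) \<bullet> (((Id b \<otimes> sg b' c) \<otimes> Id d) \<bullet> (as' b (b' \<odot> c) d \<bullet> (Id b \<otimes> as' b' c d))))))"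
    by simp
  also have "\<dots> = as c b (b' \<odot> d) \<bullet> ((sg b c \<otimes> Id (b' \<odot> d)) \<bullet> (as (b \<odot> c) b' d \<bullet> ((as' b c b' \<otimes> Id d) \<bullet> (as' b (c \<odot> b') d \<bullet> ((Id b \<otimes> (sg b' c \<otimes> Id d)) \<bullet> (Id b \<otimes> as' b' c d))))))"
  proof -
    have n1: "as (c \<odot> b) b' d \<bullet> ((sg b c \<otimes> Id b') \<otimes> Id d) = (sg b c \<otimes> Id (b' \<odot> d)) \<bullet> as (b \<odot> c) b' d"
      using as_nat0[of "sg b c" "Id b'" "Id d"] by simp
    have n2: "((Id b \<otimes> sg b' c) \<otimes> Id d) \<bullet> as' b (b' \<odot> c) d = as' b (c \<odot> b') d \<bullet> (Id b \<otimes> (sg b' c \<otimes> Id d))"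
      using as'_nat0[of "Id b" "sg b' c" "Id d"] by simp
    show ?thesis by (simp only: n1[THEN tail] n2[THEN tail] TY, (simp)?)
  qed
  also have "\<dots> = as c b (b' \<odot> d) \<bullet> ((sg b c \<otimes> Id (b' \<odot> d)) \<bullet> (as' b c (b' \<odot> d) \<bullet> ((Id b \<otimes> as c b' d) \<bullet> ((Id b \<otimes> (sg b' c \<otimes> Id d)) \<bullet> (Id b \<otimes> as' b' c d)))))"
  proof -
    have p: "as (b \<odot> c) b' d \<bullet> ((as' b c b' \<otimes> Id d) \<bullet> as' b (c \<odot> b') d) = as' b c (b' \<odot> d) \<bullet> (Id b \<otimes> as c b' d)"
      by (rule mono[where p = "as b c (b' \<odot> d)" and q = "as' b c (b' \<odot> d)"]) (simp_all add: pent_t)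
    show ?thesis by (simp only: p[THEN tail3] TY, (simp)?)
  qed
  also have "\<dots> = Xm b c (b' \<odot> d) \<bullet> (Id b \<otimes> Xm b' c d)"
    unfolding Xm_def by simp
  finally show ?thesis .
qed

lemma Xnat: "Arr f \<Longrightarrow> Arr g \<Longrightarrow> Arr h \<Longrightarrow>
  Xm (Cd f) (Cd g) (Cd h) \<bullet> (f \<otimes> (g \<otimes> h)) = (g \<otimes> (f \<otimes> h)) \<bullet> Xm (Dm f) (Dm g) (Dm h)"
proof -
  assume a: "Arr f" "Arr g" "Arr h"
  have n1: "as' (Cd f) (Cd g) (Cd h) \<bullet> (f \<otimes> (g \<otimes> h)) = ((f \<otimes> g) \<otimes> h) \<bullet> as' (Dm f) (Dm g) (Dm h)"
    using as'_nat0 a by simp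
  have n2: "sg (Cd f) (Cd g) \<bullet> (f \<otimes> g) = (g \<otimes> f) \<bullet> sg (Dm f) (Dm g)" using sg_nat0 a by simp
  have n3: "as (Cd g) (Cd f) (Cd h) \<bullet> ((g \<otimes> f) \<otimes> h) = (g \<otimes> (f \<otimes> h)) \<bullet> as (Dm g) (Dm f) (Dm h)"
    using as_nat0 a by simp
  have "Xm (Cd f) (Cd g) (Cd h) \<bullet> (f \<otimes> (g \<otimes> h))
     = as (Cd g) (Cd f) (Cd h) \<bullet> ((sg (Cd f) (Cd g) \<otimes> Id (Cd h)) \<bullet> (as' (Cd f) (Cd g) (Cd h) \<bullet> (f \<otimes> (g \<otimes> h))))"
    unfolding Xm_def using a by simp
  also have "\<dots> = as (Cd g) (Cd f) (Cd h) \<bullet> ((sg (Cd f) (Cd g) \<otimes> Id (Cd h)) \<bullet> (((f \<otimes> g) \<otimes> h) \<bullet> as' (Dm f) (Dm g) (Dm h)))"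
    by (simp only: n1)
  also have "\<dots> = as (Cd g) (Cd f) (Cd h) \<bullet> ((((g \<otimes> f) \<otimes> h) \<bullet> (sg (Dm f) (Dm g) \<otimes> Id (Dm h))) \<bullet> as' (Dm f) (Dm g) (Dm h))"
    using a by (simp add: n2)
  also have "\<dots> = (as (Cd g) (Cd f) (Cd h) \<bullet> ((g \<otimes> f) \<otimes> h)) \<bullet> ((sg (Dm f) (Dm g) \<otimes> Id (Dm h)) \<bullet> as' (Dm f) (Dm g) (Dm h))"
    using a by simp
  also have "\<dots> = (g \<otimes> (f \<otimes> h)) \<bullet> Xm (Dm f) (Dm g) (Dm h)"
    unfolding n3 Xm_def using a by simp
  finally show ?thesis .
qed

lemma mid_X: "mid C a b c d = as' a c (b \<odot> d) \<bullet> ((Id a \<otimes> Xm b c d) \<bullet> as a b (c \<odot> d))"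
  unfolding mid_def Xm_def by simp

lemma ty_mid[simp]: "Arr (mid C a b c d)" "Dm (mid C a b c d) = (a \<odot> b) \<odot> (c \<odot> d)" "Cd (mid C a b c d) = (a \<odot> c) \<odot> (b \<odot> d)"
  unfolding mid_X by simp_all

lemma as_nat_id12: "Arr G \<Longrightarrow> Cd G = Z \<Longrightarrow> as a b Z \<bullet> (Id (a \<odot> b) \<otimes> G) = (Id a \<otimes> (Id b \<otimes> G)) \<bullet> as a b (Dm G)"
  using as_nat0[of "Id a" "Id b" G] by simp
lemma as_nat_id12_t: "Arr G \<Longrightarrow> Cd G = Z \<Longrightarrow> Arr k \<Longrightarrow> Cd k = (a \<odot> b) \<odot> Dm G \<Longrightarrow>
   as a b Z \<bullet> ((Id (a \<odot> b) \<otimes> G) \<bullet> k) = (Id a \<otimes> (Id b \<otimes> G)) \<bullet> (as a b (Dm G) \<bullet> k)"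
  by (simp add: as_nat_id12[THEN tail])
lemma as'_nat_id12: "Arr G \<Longrightarrow> Dm G = Z \<Longrightarrow> (Id (a \<odot> b) \<otimes> G) \<bullet> as' a b Z = as' a b (Cd G) \<bullet> (Id a \<otimes> (Id b \<otimes> G))"
  using as'_nat0[of "Id a" "Id b" G] by simp
lemma as'_nat_id12_t: "Arr G \<Longrightarrow> Dm G = Z \<Longrightarrow> Arr k \<Longrightarrow> Cd k = a \<odot> (b \<odot> Dm G) \<Longrightarrow>
   (Id (a \<odot> b) \<otimes> G) \<bullet> (as' a b Z \<bullet> k) = as' a b (Cd G) \<bullet> ((Id a \<otimes> (Id b \<otimes> G)) \<bullet> k)"
  by (simp add: as'_nat_id12[THEN tail])

lemma XC': "Xm b (c \<odot> e) D \<bullet> (Id b \<otimes> as' c e D) = as' c e (b \<odot> D) \<bullet> ((Id c \<otimes> Xm b e D) \<bullet> Xm b c (e \<odot> D))"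
proof -
  have "as c e (b \<odot> D) \<bullet> (Xm b (c \<odot> e) D \<bullet> (Id b \<otimes> as' c e D)) = as c e (b \<odot> D) \<bullet> (as' c e (b \<odot> D) \<bullet> ((Id c \<otimes> Xm b e D) \<bullet> Xm b c (e \<odot> D)))"
    using XC by simp
  thus ?thesis by (rule mono[where q = "as' c e (b \<odot> D)"]) simp_all
qed

lemma XC_peel: "Arr H \<Longrightarrow> Cd H = c \<odot> (e \<odot> D) \<Longrightarrow>
  Xm b (c \<odot> e) D \<bullet> (Id b \<otimes> (as' c e D \<bullet> H)) = as' c e (b \<odot> D) \<bullet> ((Id c \<otimes> Xm b e D) \<bullet> (Xm b c (e \<odot> D) \<bullet> (Id b \<otimes> H)))"
proof -
  assume h: "Arr H" "Cd H = c \<odot> (e \<odot> D)"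
  have "Xm b (c \<odot> e) D \<bullet> (Id b \<otimes> (as' c e D \<bullet> H)) = Xm b (c \<odot> e) D \<bullet> ((Id b \<otimes> as' c e D) \<bullet> (Id b \<otimes> H))"
    using h by simp
  also have "\<dots> = as' c e (b \<odot> D) \<bullet> ((Id c \<otimes> Xm b e D) \<bullet> (Xm b c (e \<odot> D) \<bullet> (Id b \<otimes> H)))"
    using h by (simp only: XC'[THEN tail] TY, (simp)?)
  finally show ?thesis .
qed

lemma XC_peel_t: "Arr H \<Longrightarrow> Cd H = c \<odot> (e \<odot> D) \<Longrightarrow> Arr k \<Longrightarrow> Cd k = b \<odot> Dm H \<Longrightarrow>
  Xm b (c \<odot> e) D \<bullet> ((Id b \<otimes> (as' c e D \<bullet> H)) \<bullet> k) = as' c e (b \<odot> D) \<bullet> ((Id c \<otimes> Xm b e D) \<bullet> (Xm b c (e \<odot> D) \<bullet> ((Id b \<otimes> H) \<bullet> k)))"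
  by (simp add: XC_peel[THEN tail])

lemma Xnat_peel: "Arr G \<Longrightarrow> Cd G = Z \<Longrightarrow> Arr H \<Longrightarrow> Cd H = c \<odot> Dm G \<Longrightarrow>
  Xm b c Z \<bullet> (Id b \<otimes> ((Id c \<otimes> G) \<bullet> H)) = (Id c \<otimes> (Id b \<otimes> G)) \<bullet> (Xm b c (Dm G) \<bullet> (Id b \<otimes> H))"
proof -
  assume h: "Arr G" "Cd G = Z" "Arr H" "Cd H = c \<odot> Dm G"
  have n: "Xm b c Z \<bullet> (Id b \<otimes> (Id c \<otimes> G)) = (Id c \<otimes> (Id b \<otimes> G)) \<bullet> Xm b c (Dm G)"
    using Xnat[of "Id b" "Id c" G] h by simp
  have "Xm b c Z \<bullet> (Id b \<otimes> ((Id c \<otimes> G) \<bullet> H)) = Xm b c Z \<bullet> ((Id b \<otimes> (Id c \<otimes> G)) \<bullet> (Id b \<otimes> H))"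
    using h by simp
  also have "\<dots> = (Id c \<otimes> (Id b \<otimes> G)) \<bullet> (Xm b c (Dm G) \<bullet> (Id b \<otimes> H))"
    using h by (simp only: n[THEN tail] TY, (simp)?)
  finally show ?thesis .
qed

lemma Xnat_peel_t: "Arr G \<Longrightarrow> Cd G = Z \<Longrightarrow> Arr H \<Longrightarrow> Cd H = c \<odot> Dm G \<Longrightarrow> Arr k \<Longrightarrow> Cd k = b \<odot> Dm H \<Longrightarrow>
  Xm b c Z \<bullet> ((Id b \<otimes> ((Id c \<otimes> G) \<bullet> H)) \<bullet> k) = (Id c \<otimes> (Id b \<otimes> G)) \<bullet> (Xm b c (Dm G) \<bullet> ((Id b \<otimes> H) \<bullet> k))"
  by (simp add: Xnat_peel[THEN tail])

lemma XB_t: "Arr k \<Longrightarrow> Cd k = (b \<odot> (c \<odot> d)) \<odot> e \<Longrightarrow> Xm b c (d \<odot> e) \<bullet> ((Id b \<otimes> as c d e) \<bullet> (as b (c \<odot> d) e \<bullet> k))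
   = (Id c \<otimes> as b d e) \<bullet> (as c (b \<odot> d) e \<bullet> ((Xm b c d \<otimes> Id e) \<bullet> k))"
  by (simp add: XB[THEN tail3])

lemma XD': "Xm b e (d \<odot> f) \<bullet> ((Id b \<otimes> Xm d e f) \<bullet> as b d (e \<odot> f)) = (Id e \<otimes> as b d f) \<bullet> Xm (b \<odot> d) e f"
proof -
  have "(Id e \<otimes> as b d f) \<bullet> Xm (b \<odot> d) e f = ((Id e \<otimes> as b d f) \<bullet> (Xm (b \<odot> d) e f \<bullet> as' b d (e \<odot> f))) \<bullet> as b d (e \<odot> f)"
    by simp
  also have "\<dots> = Xm b e (d \<odot> f) \<bullet> ((Id b \<otimes> Xm d e f) \<bullet> as b d (e \<odot> f))"
    by (simp only: XD, simp)
  finally show ?thesis by simp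
qed

lemma XD'_t: "Arr k \<Longrightarrow> Cd k = (b \<odot> d) \<odot> (e \<odot> f) \<Longrightarrow> Xm b e (d \<odot> f) \<bullet> ((Id b \<otimes> Xm d e f) \<bullet> (as b d (e \<odot> f) \<bullet> k)) = (Id e \<otimes> as b d f) \<bullet> (Xm (b \<odot> d) e f \<bullet> k)"
  by (simp add: XD'[THEN tail3])

lemma H1R: "mid C a b (c \<odot> e) (d \<odot> f) \<bullet> ((Id (a \<odot> b) \<otimes> mid C c d e f) \<bullet> as (a \<odot> b) (c \<odot> d) (e \<odot> f))
  = as' a (c \<odot> e) (b \<odot> (d \<odot> f)) \<bullet> ((Id a \<otimes> (as' c e (b \<odot> (d \<odot> f)) \<bullet> ((Id c \<otimes> ((Id e \<otimes> as b d f) \<bullet> Xm (b \<odot> d) e f)) \<bullet> (as c (b \<odot> d) (e \<odot> f) \<bullet> (Xm b c d \<otimes> Id (e \<odot> f)))))) \<bullet> (as a (b \<odot> (c \<odot> d)) (e \<odot> f) \<bullet> (as a b (c \<odot> d) \<otimes> Id (e \<odot> f))))"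
  unfolding mid_X
  by (simp add: as_nat_id12 as_nat_id12_t pentagon pent_t XC_peel XC_peel_t Xnat_peel Xnat_peel_t XB XB_t XD' XD'_t)

lemma PP1: "Arr H \<Longrightarrow> Cd H = W \<odot> (X \<odot> Y) \<Longrightarrow>
  as (W \<odot> X) Y Z \<bullet> ((as' W X Y \<bullet> H) \<otimes> Id Z) = as' W X (Y \<odot> Z) \<bullet> ((Id W \<otimes> as X Y Z) \<bullet> (as W (X \<odot> Y) Z \<bullet> (H \<otimes> Id Z)))"
  by (simp add: pent_v1[THEN tail3])
lemma PP1_t: "Arr H \<Longrightarrow> Cd H = W \<odot> (X \<odot> Y) \<Longrightarrow> Arr k \<Longrightarrow> Cd k = Dm H \<odot> Z \<Longrightarrow>
  as (W \<odot> X) Y Z \<bullet> (((as' W X Y \<bullet> H) \<otimes> Id Z) \<bullet> k) = as' W X (Y \<odot> Z) \<bullet> ((Id W \<otimes> as X Y Z) \<bullet> (as W (X \<odot> Y) Z \<bullet> ((H \<otimes> Id Z) \<bullet> k)))"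
  by (simp add: pent_v1[THEN tail3])

lemma as_peel: "Arr f \<Longrightarrow> Arr g \<Longrightarrow> Arr H \<Longrightarrow> Cd f = X \<Longrightarrow> Cd g = Y \<Longrightarrow> Cd H = Dm f \<odot> Dm g \<Longrightarrow>
  as X Y Z \<bullet> (((f \<otimes> g) \<bullet> H) \<otimes> Id Z) = (f \<otimes> (g \<otimes> Id Z)) \<bullet> (as (Dm f) (Dm g) Z \<bullet> (H \<otimes> Id Z))"
proof -
  assume h: "Arr f" "Arr g" "Arr H" "Cd f = X" "Cd g = Y" "Cd H = Dm f \<odot> Dm g"
  have n: "as X Y Z \<bullet> ((f \<otimes> g) \<otimes> Id Z) = (f \<otimes> (g \<otimes> Id Z)) \<bullet> as (Dm f) (Dm g) Z"
    using as_nat0[of f g "Id Z"] h by simp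
  have "as X Y Z \<bullet> (((f \<otimes> g) \<bullet> H) \<otimes> Id Z) = as X Y Z \<bullet> (((f \<otimes> g) \<otimes> Id Z) \<bullet> (H \<otimes> Id Z))"
    using h by simp
  also have "\<dots> = (f \<otimes> (g \<otimes> Id Z)) \<bullet> (as (Dm f) (Dm g) Z \<bullet> (H \<otimes> Id Z))"
    using h by (simp only: n[THEN tail] TY, (simp)?)
  finally show ?thesis .
qed
lemma as_peel_t: "Arr f \<Longrightarrow> Arr g \<Longrightarrow> Arr H \<Longrightarrow> Cd f = X \<Longrightarrow> Cd g = Y \<Longrightarrow> Cd H = Dm f \<odot> Dm g \<Longrightarrow>
  Arr k \<Longrightarrow> Cd k = Dm H \<odot> Z \<Longrightarrow>
  as X Y Z \<bullet> ((((f \<otimes> g) \<bullet> H) \<otimes> Id Z) \<bullet> k) = (f \<otimes> (g \<otimes> Id Z)) \<bullet> (as (Dm f) (Dm g) Z \<bullet> ((H \<otimes> Id Z) \<bullet> k))"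
  by (simp add: as_peel[THEN tail])

lemma H1L: "(as a c e \<otimes> as b d f) \<bullet> (mid C (a \<odot> c) (b \<odot> d) e f \<bullet> (mid C a b c d \<otimes> Id (e \<odot> f)))
  = (as a c e \<otimes> as b d f) \<bullet> (as' (a \<odot> c) e ((b \<odot> d) \<odot> f) \<bullet> ((Id (a \<odot> c) \<otimes> Xm (b \<odot> d) e f) \<bullet> (as' a c ((b \<odot> d) \<odot> (e \<odot> f)) \<bullet> ((Id a \<otimes> (as c (b \<odot> d) (e \<odot> f) \<bullet> (Xm b c d \<otimes> Id (e \<odot> f)))) \<bullet> (as a (b \<odot> (c \<odot> d)) (e \<odot> f) \<bullet> (as a b (c \<odot> d) \<otimes> Id (e \<odot> f)))))))"
  unfolding mid_X
  by (simp add: PP1 PP1_t as_peel as_peel_t)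

lemma H1M: "Arr g \<Longrightarrow> Dm g = (b \<odot> d) \<odot> (e \<odot> f) \<Longrightarrow> Cd g = e \<odot> ((b \<odot> d) \<odot> f) \<Longrightarrow>
  (as a c e \<otimes> as b d f) \<bullet> (as' (a \<odot> c) e ((b \<odot> d) \<odot> f) \<bullet> ((Id (a \<odot> c) \<otimes> g) \<bullet> as' a c ((b \<odot> d) \<odot> (e \<odot> f))))
  = as' a (c \<odot> e) (b \<odot> (d \<odot> f)) \<bullet> (Id a \<otimes> (as' c e (b \<odot> (d \<odot> f)) \<bullet> (Id c \<otimes> ((Id e \<otimes> as b d f) \<bullet> g))))"
proof -
  assume g: "Arr g" "Dm g = (b \<odot> d) \<odot> (e \<odot> f)" "Cd g = e \<odot> ((b \<odot> d) \<odot> f)"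
  have n1: "(Id ((a \<odot> c) \<odot> e) \<otimes> as b d f) \<bullet> as' (a \<odot> c) e ((b \<odot> d) \<odot> f) = as' (a \<odot> c) e (b \<odot> (d \<odot> f)) \<bullet> (Id (a \<odot> c) \<otimes> (Id e \<otimes> as b d f))"
    by (simp add: as'_nat_id12)
  have n2: "(Id (a \<odot> c) \<otimes> ((Id e \<otimes> as b d f) \<bullet> g)) \<bullet> as' a c ((b \<odot> d) \<odot> (e \<odot> f)) = as' a c (e \<odot> (b \<odot> (d \<odot> f))) \<bullet> (Id a \<otimes> (Id c \<otimes> ((Id e \<otimes> as b d f) \<bullet> g)))"
    using g by (simp add: as'_nat_id12)
  have p: "(as a c e \<otimes> Id W) \<bullet> (as' (a \<odot> c) e W \<bullet> as' a c (e \<odot> W)) = as' a (c \<odot> e) W \<bullet> (Id a \<otimes> as' c e W)" for W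
    by (simp add: pent_inv)
  have "(as a c e \<otimes> as b d f) \<bullet> (as' (a \<odot> c) e ((b \<odot> d) \<odot> f) \<bullet> ((Id (a \<odot> c) \<otimes> g) \<bullet> as' a c ((b \<odot> d) \<odot> (e \<odot> f))))
     = (as a c e \<otimes> Id (b \<odot> (d \<odot> f))) \<bullet> ((Id ((a \<odot> c) \<odot> e) \<otimes> as b d f) \<bullet> (as' (a \<odot> c) e ((b \<odot> d) \<odot> f) \<bullet> ((Id (a \<odot> c) \<otimes> g) \<bullet> as' a c ((b \<odot> d) \<odot> (e \<odot> f)))))"
    using g by simp
  also have "\<dots> = (as a c e \<otimes> Id (b \<odot> (d \<odot> f))) \<bullet> (as' (a \<odot> c) e (b \<odot> (d \<odot> f)) \<bullet> ((Id (a \<odot> c) \<otimes> (Id e \<otimes> as b d f)) \<bullet> ((Id (a \<odot> c) \<otimes> g) \<bullet> as' a c ((b \<odot> d) \<odot> (e \<odot> f)))))"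
    using g by (simp only: n1[THEN tail] TY, (simp)?)
  also have "\<dots> = (as a c e \<otimes> Id (b \<odot> (d \<odot> f))) \<bullet> (as' (a \<odot> c) e (b \<odot> (d \<odot> f)) \<bullet> ((Id (a \<odot> c) \<otimes> ((Id e \<otimes> as b d f) \<bullet> g)) \<bullet> as' a c ((b \<odot> d) \<odot> (e \<odot> f))))"
    using g by simp
  also have "\<dots> = (as a c e \<otimes> Id (b \<odot> (d \<odot> f))) \<bullet> (as' (a \<odot> c) e (b \<odot> (d \<odot> f)) \<bullet> (as' a c (e \<odot> (b \<odot> (d \<odot> f))) \<bullet> (Id a \<otimes> (Id c \<otimes> ((Id e \<otimes> as b d f) \<bullet> g)))))"
    using g by (simp only: n2, (simp)?)
  also have "\<dots> = as' a (c \<odot> e) (b \<odot> (d \<odot> f)) \<bullet> ((Id a \<otimes> as' c e (b \<odot> (d \<odot> f))) \<bullet> (Id a \<otimes> (Id c \<otimes> ((Id e \<otimes> as b d f) \<bullet> g))))"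
    using g by (simp only: p[THEN tail3] TY, (simp)?)
  also have "\<dots> = as' a (c \<odot> e) (b \<odot> (d \<odot> f)) \<bullet> (Id a \<otimes> (as' c e (b \<odot> (d \<odot> f)) \<bullet> (Id c \<otimes> ((Id e \<otimes> as b d f) \<bullet> g))))"
    using g by simp
  finally show ?thesis .
qed

lemma H1: "(as a c e \<otimes> as b d f) \<bullet> (mid C (a \<odot> c) (b \<odot> d) e f \<bullet> (mid C a b c d \<otimes> Id (e \<odot> f)))
   = mid C a b (c \<odot> e) (d \<odot> f) \<bullet> ((Id (a \<odot> b) \<otimes> mid C c d e f) \<bullet> as (a \<odot> b) (c \<odot> d) (e \<odot> f))"
proof -
  have m: "(as a c e \<otimes> as b d f) \<bullet> (as' (a \<odot> c) e ((b \<odot> d) \<odot> f) \<bullet> ((Id (a \<odot> c) \<otimes> Xm (b \<odot> d) e f) \<bullet> as' a c ((b \<odot> d) \<odot> (e \<odot> f))))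
  = as' a (c \<odot> e) (b \<odot> (d \<odot> f)) \<bullet> (Id a \<otimes> (as' c e (b \<odot> (d \<odot> f)) \<bullet> (Id c \<otimes> ((Id e \<otimes> as b d f) \<bullet> Xm (b \<odot> d) e f))))"
    by (rule H1M) simp_all
  show ?thesis unfolding H1L H1R
    by (simp only: m[THEN tail4] TY, (simp)?)
qed

lemma XD2: "Xm (b \<odot> b') c d = (Id c \<otimes> as' b b' d) \<bullet> (Xm b c (b' \<odot> d) \<bullet> ((Id b \<otimes> Xm b' c d) \<bullet> as b b' (c \<odot> d)))"
proof -
  have "Xm (b \<odot> b') c d = (Id c \<otimes> as' b b' d) \<bullet> (((Id c \<otimes> as b b' d) \<bullet> (Xm (b \<odot> b') c d \<bullet> as' b b' (c \<odot> d))) \<bullet> as b b' (c \<odot> d))"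
    by simp
  also have "\<dots> = (Id c \<otimes> as' b b' d) \<bullet> (Xm b c (b' \<odot> d) \<bullet> ((Id b \<otimes> Xm b' c d) \<bullet> as b b' (c \<odot> d)))"
    by (simp only: XD, simp)
  finally show ?thesis .
qed

lemma XCr: "(Id c \<otimes> Xm b c' d) \<bullet> (Xm b c (c' \<odot> d) \<bullet> (Id b \<otimes> as c c' d)) = as c c' (b \<odot> d) \<bullet> Xm b (c \<odot> c') d"
proof -
  have "as c c' (b \<odot> d) \<bullet> Xm b (c \<odot> c') d = (as c c' (b \<odot> d) \<bullet> (Xm b (c \<odot> c') d \<bullet> (Id b \<otimes> as' c c' d))) \<bullet> (Id b \<otimes> as c c' d)"
    by simp
  also have "\<dots> = (Id c \<otimes> Xm b c' d) \<bullet> (Xm b c (c' \<odot> d) \<bullet> (Id b \<otimes> as c c' d))"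
    by (simp only: XC, simp)
  finally show ?thesis by simp
qed

lemma XBr: "as d (b \<odot> e) g \<bullet> ((Xm b d e \<otimes> Id g) \<bullet> as' b (d \<odot> e) g) = (Id d \<otimes> as' b e g) \<bullet> (Xm b d (e \<odot> g) \<bullet> (Id b \<otimes> as d e g))"
proof -
  have "(Id d \<otimes> as' b e g) \<bullet> (Xm b d (e \<odot> g) \<bullet> (Id b \<otimes> as d e g))
     = (Id d \<otimes> as' b e g) \<bullet> ((Xm b d (e \<odot> g) \<bullet> ((Id b \<otimes> as d e g) \<bullet> as b (d \<odot> e) g)) \<bullet> as' b (d \<odot> e) g)"
    by simp
  also have "\<dots> = as d (b \<odot> e) g \<bullet> ((Xm b d e \<otimes> Id g) \<bullet> as' b (d \<odot> e) g)"
    by (simp only: XB, simp)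
  finally show ?thesis by simp
qed
lemma XBr_t: "Arr k \<Longrightarrow> Cd k = b \<odot> ((d \<odot> e) \<odot> g) \<Longrightarrow>
  as d (b \<odot> e) g \<bullet> ((Xm b d e \<otimes> Id g) \<bullet> (as' b (d \<odot> e) g \<bullet> k)) = (Id d \<otimes> as' b e g) \<bullet> (Xm b d (e \<odot> g) \<bullet> ((Id b \<otimes> as d e g) \<bullet> k))"
  by (simp add: XBr[THEN tail3])

lemma Xnat_rpeel: "Arr G \<Longrightarrow> Arr H \<Longrightarrow> Dm G = Z \<Longrightarrow> Dm H = b \<odot> Cd G \<Longrightarrow> Arr k \<Longrightarrow> Cd k = b \<odot> (d \<odot> Z) \<Longrightarrow>
  (Id d \<otimes> (H \<bullet> (Id b \<otimes> G))) \<bullet> (Xm b d Z \<bullet> k) = (Id d \<otimes> H) \<bullet> (Xm b d (Cd G) \<bullet> ((Id b \<otimes> (Id d \<otimes> G)) \<bullet> k))"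
proof -
  assume h: "Arr G" "Arr H" "Dm G = Z" "Dm H = b \<odot> Cd G" "Arr k" "Cd k = b \<odot> (d \<odot> Z)"
  have n: "(Id d \<otimes> (Id b \<otimes> G)) \<bullet> Xm b d Z = Xm b d (Cd G) \<bullet> (Id b \<otimes> (Id d \<otimes> G))"
    using Xnat[of "Id b" "Id d" G] h by simp
  have "(Id d \<otimes> (H \<bullet> (Id b \<otimes> G))) \<bullet> (Xm b d Z \<bullet> k) = (Id d \<otimes> H) \<bullet> ((Id d \<otimes> (Id b \<otimes> G)) \<bullet> (Xm b d Z \<bullet> k))"
    using h by simp
  also have "\<dots> = (Id d \<otimes> H) \<bullet> (Xm b d (Cd G) \<bullet> ((Id b \<otimes> (Id d \<otimes> G)) \<bullet> k))"
    using h by (simp only: n[THEN tail] TY, (simp)?)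
  finally show ?thesis .
qed

lemma K1': "as d (b \<odot> e) (c \<odot> f) \<bullet> ((Xm b d e \<otimes> Id (c \<odot> f)) \<bullet> (as' b (d \<odot> e) (c \<odot> f) \<bullet> ((Id b \<otimes> Xm c (d \<odot> e) f) \<bullet> as b c ((d \<odot> e) \<odot> f))))
  = (Id d \<otimes> mid C b c e f) \<bullet> (Xm (b \<odot> c) d (e \<odot> f) \<bullet> (Id (b \<odot> c) \<otimes> as d e f))"
  unfolding mid_X
  by (simp add: XD2 Xnat_rpeel as_nat_id12 as_nat_id12_t XCr XBr_t)

lemma PV3: "as a (b \<odot> D) Z \<bullet> ((as a b D \<otimes> Id Z) \<bullet> as' (a \<odot> b) D Z) = (Id a \<otimes> as' b D Z) \<bullet> as a b (D \<odot> Z)"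
  by (rule mono[where p = "Id a \<otimes> as b D Z" and q = "Id a \<otimes> as' b D Z"]) (simp_all add: pent_rev_t)
lemma PV3_t: "Arr k \<Longrightarrow> Cd k = (a \<odot> b) \<odot> (D \<odot> Z) \<Longrightarrow>
  as a (b \<odot> D) Z \<bullet> ((as a b D \<otimes> Id Z) \<bullet> (as' (a \<odot> b) D Z \<bullet> k)) = (Id a \<otimes> as' b D Z) \<bullet> (as a b (D \<odot> Z) \<bullet> k)"
  by (simp add: PV3[THEN tail3])

lemma K1L: "as (a \<odot> d) (b \<odot> e) (c \<odot> f) \<bullet> ((mid C a b d e \<otimes> Id (c \<odot> f)) \<bullet> mid C (a \<odot> b) c (d \<odot> e) f)
  = as' a d ((b \<odot> e) \<odot> (c \<odot> f)) \<bullet> ((Id a \<otimes> (as d (b \<odot> e) (c \<odot> f) \<bullet> ((Xm b d e \<otimes> Id (c \<odot> f)) \<bullet> (as' b (d \<odot> e) (c \<odot> f) \<bullet> ((Id b \<otimes> Xm c (d \<odot> e) f) \<bullet> as b c ((d \<odot> e) \<odot> f)))))) \<bullet> (as a (b \<odot> c) ((d \<odot> e) \<odot> f) \<bullet> (as a b c \<otimes> Id ((d \<odot> e) \<odot> f))))"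
  unfolding mid_X
  by (simp add: PP1_t as_peel_t PV3_t as_nat_id12_t pentagon pent_t)

lemma K1R: "(Id (a \<odot> d) \<otimes> mid C b c e f) \<bullet> (mid C a (b \<odot> c) d (e \<odot> f) \<bullet> (as a b c \<otimes> as d e f))
  = as' a d ((b \<odot> e) \<odot> (c \<odot> f)) \<bullet> ((Id a \<otimes> ((Id d \<otimes> mid C b c e f) \<bullet> (Xm (b \<odot> c) d (e \<odot> f) \<bullet> (Id (b \<odot> c) \<otimes> as d e f)))) \<bullet> (as a (b \<odot> c) ((d \<odot> e) \<odot> f) \<bullet> (as a b c \<otimes> Id ((d \<odot> e) \<odot> f))))"
proof -
  have sp: "as a b c \<otimes> as d e f = (Id (a \<odot> (b \<odot> c)) \<otimes> as d e f) \<bullet> (as a b c \<otimes> Id ((d \<odot> e) \<odot> f))" by simp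
  have "(Id (a \<odot> d) \<otimes> mid C b c e f) \<bullet> (mid C a (b \<odot> c) d (e \<odot> f) \<bullet> (as a b c \<otimes> as d e f))
    = (Id (a \<odot> d) \<otimes> mid C b c e f) \<bullet> (as' a d ((b \<odot> c) \<odot> (e \<odot> f)) \<bullet> ((Id a \<otimes> Xm (b \<odot> c) d (e \<odot> f)) \<bullet> (as a (b \<odot> c) (d \<odot> (e \<odot> f)) \<bullet> ((Id (a \<odot> (b \<odot> c)) \<otimes> as d e f) \<bullet> (as a b c \<otimes> Id ((d \<odot> e) \<odot> f))))))"
    unfolding sp mid_X[of a "b \<odot> c" d "e \<odot> f"] by (simp only: cassoc TY)
  also have "\<dots> = (Id (a \<odot> d) \<otimes> mid C b c e f) \<bullet> (as' a d ((b \<odot> c) \<odot> (e \<odot> f)) \<bullet> ((Id a \<otimes> Xm (b \<odot> c) d (e \<odot> f)) \<bullet> ((Id a \<otimes> (Id (b \<odot> c) \<otimes> as d e f)) \<bullet> (as a (b \<odot> c) ((d \<odot> e) \<odot> f) \<bullet> (as a b c \<otimes> Id ((d \<odot> e) \<odot> f))))))"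
    by (simp only: as_nat_id12_t TY, (simp)?)
  also have "\<dots> = as' a d ((b \<odot> e) \<odot> (c \<odot> f)) \<bullet> ((Id a \<otimes> ((Id d \<otimes> mid C b c e f) \<bullet> (Xm (b \<odot> c) d (e \<odot> f) \<bullet> (Id (b \<odot> c) \<otimes> as d e f)))) \<bullet> (as a (b \<odot> c) ((d \<odot> e) \<odot> f) \<bullet> (as a b c \<otimes> Id ((d \<odot> e) \<odot> f))))"
    by (simp add: as'_nat_id12_t)
  finally show ?thesis .
qed

lemma K1: "as (a \<odot> d) (b \<odot> e) (c \<odot> f) \<bullet> ((mid C a b d e \<otimes> Id (c \<odot> f)) \<bullet> mid C (a \<odot> b) c (d \<odot> e) f)
  = (Id (a \<odot> d) \<otimes> mid C b c e f) \<bullet> (mid C a (b \<odot> c) d (e \<odot> f) \<bullet> (as a b c \<otimes> as d e f))"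
  unfolding K1L K1R K1' ..

lemma F1: "Arr f \<Longrightarrow> Arr g \<Longrightarrow> Arr h \<Longrightarrow> Arr k \<Longrightarrow>
  mid C (Cd f) (Cd g) (Cd h) (Cd k) \<bullet> ((f \<otimes> g) \<otimes> (h \<otimes> k)) = ((f \<otimes> h) \<otimes> (g \<otimes> k)) \<bullet> mid C (Dm f) (Dm g) (Dm h) (Dm k)"
proof -
  assume a: "Arr f" "Arr g" "Arr h" "Arr k"
  have n1: "as (Cd f) (Cd g) (Cd h \<odot> Cd k) \<bullet> ((f \<otimes> g) \<otimes> (h \<otimes> k)) = (f \<otimes> (g \<otimes> (h \<otimes> k))) \<bullet> as (Dm f) (Dm g) (Dm h \<odot> Dm k)"
    using as_nat0[of f g "h \<otimes> k"] a by simp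
  have n2: "Xm (Cd g) (Cd h) (Cd k) \<bullet> (g \<otimes> (h \<otimes> k)) = (h \<otimes> (g \<otimes> k)) \<bullet> Xm (Dm g) (Dm h) (Dm k)"
    using Xnat a by simp
  have n3: "as' (Cd f) (Cd h) (Cd g \<odot> Cd k) \<bullet> (f \<otimes> (h \<otimes> (g \<otimes> k))) = ((f \<otimes> h) \<otimes> (g \<otimes> k)) \<bullet> as' (Dm f) (Dm h) (Dm g \<odot> Dm k)"
    using as'_nat0[of f h "g \<otimes> k"] a by simp
  have "mid C (Cd f) (Cd g) (Cd h) (Cd k) \<bullet> ((f \<otimes> g) \<otimes> (h \<otimes> k))
     = as' (Cd f) (Cd h) (Cd g \<odot> Cd k) \<bullet> ((Id (Cd f) \<otimes> Xm (Cd g) (Cd h) (Cd k)) \<bullet> (as (Cd f) (Cd g) (Cd h \<odot> Cd k) \<bullet> ((f \<otimes> g) \<otimes> (h \<otimes> k))))"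
    unfolding mid_X using a by simp
  also have "\<dots> = as' (Cd f) (Cd h) (Cd g \<odot> Cd k) \<bullet> ((Id (Cd f) \<otimes> Xm (Cd g) (Cd h) (Cd k)) \<bullet> ((f \<otimes> (g \<otimes> (h \<otimes> k))) \<bullet> as (Dm f) (Dm g) (Dm h \<odot> Dm k)))"
    by (simp only: n1)
  also have "\<dots> = as' (Cd f) (Cd h) (Cd g \<odot> Cd k) \<bullet> ((f \<otimes> (Xm (Cd g) (Cd h) (Cd k) \<bullet> (g \<otimes> (h \<otimes> k)))) \<bullet> as (Dm f) (Dm g) (Dm h \<odot> Dm k))"
    using a by simp
  also have "\<dots> = as' (Cd f) (Cd h) (Cd g \<odot> Cd k) \<bullet> ((f \<otimes> ((h \<otimes> (g \<otimes> k)) \<bullet> Xm (Dm g) (Dm h) (Dm k))) \<bullet> as (Dm f) (Dm g) (Dm h \<odot> Dm k))"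
    by (simp only: n2)
  also have "\<dots> = (as' (Cd f) (Cd h) (Cd g \<odot> Cd k) \<bullet> (f \<otimes> (h \<otimes> (g \<otimes> k)))) \<bullet> ((Id (Dm f) \<otimes> Xm (Dm g) (Dm h) (Dm k)) \<bullet> as (Dm f) (Dm g) (Dm h \<odot> Dm k))"
    using a by simp
  also have "\<dots> = ((f \<otimes> h) \<otimes> (g \<otimes> k)) \<bullet> mid C (Dm f) (Dm g) (Dm h) (Dm k)"
    unfolding n3 mid_X using a by simp
  finally show ?thesis .
qed

lemma lu_rule: "Arr G \<Longrightarrow> Cd G = X \<Longrightarrow> lu0 X \<bullet> (Id I \<otimes> G) = G \<bullet> lu0 (Dm G)"
  using lu_nat0[of G] by simp
lemma lu_rule_t: "Arr G \<Longrightarrow> Cd G = X \<Longrightarrow> Arr k \<Longrightarrow> Cd k = I \<odot> Dm G \<Longrightarrow> lu0 X \<bullet> ((Id I \<otimes> G) \<bullet> k) = G \<bullet> (lu0 (Dm G) \<bullet> k)"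
  by (simp add: lu_rule[THEN tail])
lemma ru_rule: "Arr G \<Longrightarrow> Cd G = X \<Longrightarrow> ru0 X \<bullet> (G \<otimes> Id I) = G \<bullet> ru0 (Dm G)"
  using ru_nat0[of G] by simp
lemma ru_rule_t: "Arr G \<Longrightarrow> Cd G = X \<Longrightarrow> Arr k \<Longrightarrow> Cd k = Dm G \<odot> I \<Longrightarrow> ru0 X \<bullet> ((G \<otimes> Id I) \<bullet> k) = G \<bullet> (ru0 (Dm G) \<bullet> k)"
  by (simp add: ru_rule[THEN tail])
lemma KB_t: "Arr k \<Longrightarrow> Cd k = (I \<odot> a) \<odot> b \<Longrightarrow> lu0 (a \<odot> b) \<bullet> (as I a b \<bullet> k) = (lu0 a \<otimes> Id b) \<bullet> k"
  by (simp add: KB[THEN tail1])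
lemma KB'_t: "Arr k \<Longrightarrow> Cd k = I \<odot> (a \<odot> b) \<Longrightarrow> (lu0 a \<otimes> Id b) \<bullet> (as' I a b \<bullet> k) = lu0 (a \<odot> b) \<bullet> k"
  by (simp add: KB'[THEN tail1])
lemma KA'_t: "Arr k \<Longrightarrow> Cd k = a \<odot> (b \<odot> I) \<Longrightarrow> ru0 (a \<odot> b) \<bullet> (as' a b I \<bullet> k) = (Id a \<otimes> ru0 b) \<bullet> k"
  by (simp add: KA'[THEN tail1])
lemma tri_t: "Arr k \<Longrightarrow> Cd k = (X \<odot> I) \<odot> Y \<Longrightarrow> (Id X \<otimes> lu0 Y) \<bullet> (as X I Y \<bullet> k) = (ru0 X \<otimes> Id Y) \<bullet> k"
  by (simp add: triangle[THEN tail1])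
lemma tri'_t: "Arr k \<Longrightarrow> Cd k = X \<odot> (I \<odot> Y) \<Longrightarrow> (ru0 X \<otimes> Id Y) \<bullet> (as' X I Y \<bullet> k) = (Id X \<otimes> lu0 Y) \<bullet> k"
  by (simp add: tri'[THEN tail1])

lemma U1: "(lu0 a \<otimes> lu0 b) \<bullet> mid C I I a b = lu0 (a \<odot> b) \<bullet> (lu0 I \<otimes> Id (a \<odot> b))"
proof -
  have s1: "(lu0 a \<otimes> lu0 b) \<bullet> as' I a (I \<odot> b) = lu0 (a \<odot> b) \<bullet> (Id I \<otimes> (Id a \<otimes> lu0 b))"
  proof -
    have "(lu0 a \<otimes> lu0 b) \<bullet> as' I a (I \<odot> b) = (Id a \<otimes> lu0 b) \<bullet> ((lu0 a \<otimes> Id (I \<odot> b)) \<bullet> as' I a (I \<odot> b))" by simp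
    also have "\<dots> = (Id a \<otimes> lu0 b) \<bullet> lu0 (a \<odot> (I \<odot> b))" by (simp only: KB')
    also have "\<dots> = lu0 (a \<odot> b) \<bullet> (Id I \<otimes> (Id a \<otimes> lu0 b))" using lu_nat0[of "Id a \<otimes> lu0 b"] by simp
    finally show ?thesis .
  qed
  show ?thesis unfolding mid_X Xm_def
    by (simp add: s1[THEN tail] tri_t BU2 KB' triangle LR[symmetric])
qed

lemma U2: "(ru0 a \<otimes> ru0 b) \<bullet> mid C a b I I = ru0 (a \<odot> b) \<bullet> (Id (a \<odot> b) \<otimes> lu0 I)"
proof -
  have s1: "(ru0 a \<otimes> ru0 b) \<bullet> as' a I (b \<odot> I) = Id a \<otimes> (ru0 b \<bullet> lu0 (b \<odot> I))"
  proof -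
    have "(ru0 a \<otimes> ru0 b) \<bullet> as' a I (b \<odot> I) = (ru0 a \<otimes> Id b) \<bullet> ((Id (a \<odot> I) \<otimes> ru0 b) \<bullet> as' a I (b \<odot> I))" by simp
    also have "\<dots> = (ru0 a \<otimes> Id b) \<bullet> (as' a I b \<bullet> (Id a \<otimes> (Id I \<otimes> ru0 b)))" by (simp add: as'_nat_id12)
    also have "\<dots> = Id a \<otimes> (lu0 b \<bullet> (Id I \<otimes> ru0 b))" by (simp add: tri'_t)
    also have "\<dots> = Id a \<otimes> (ru0 b \<bullet> lu0 (b \<odot> I))" using lu_nat0[of "ru0 b"] by simp
    finally show ?thesis .
  qed
  have r: "ru0 b \<bullet> ((ru0 b \<otimes> Id I) \<bullet> k) = ru0 b \<bullet> (ru0 (b \<odot> I) \<bullet> k)" if "Arr k" "Cd k = (b \<odot> I) \<odot> I" for k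
    using ru_nat0[of "ru0 b", THEN tail, of k] that by simp
  have "(ru0 a \<otimes> ru0 b) \<bullet> mid C a b I I = (Id a \<otimes> (ru0 b \<bullet> (Id b \<otimes> ru0 I))) \<bullet> as a b (I \<odot> I)"
    unfolding mid_X Xm_def
    by (simp add: s1[THEN tail1] KB_t BU1 r KA')
  also have "\<dots> = ((Id a \<otimes> ru0 b) \<bullet> as a b I) \<bullet> (Id (a \<odot> b) \<otimes> ru0 I)"
    by (simp add: as_nat_id12)
  also have "\<dots> = ru0 (a \<odot> b) \<bullet> (Id (a \<odot> b) \<otimes> lu0 I)"
    by (simp only: KA LR)
  finally show ?thesis .
qed

lemma tri_peel: "Arr H \<Longrightarrow> Dm H = Y \<Longrightarrow> (Id X \<otimes> (H \<bullet> lu0 Y)) \<bullet> as X I Y = ru0 X \<otimes> H"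
proof -
  assume h: "Arr H" "Dm H = Y"
  have "(Id X \<otimes> (H \<bullet> lu0 Y)) \<bullet> as X I Y = (Id X \<otimes> H) \<bullet> ((Id X \<otimes> lu0 Y) \<bullet> as X I Y)" using h by simp
  also have "\<dots> = ru0 X \<otimes> H" using h by (simp only: triangle, simp)
  finally show ?thesis .
qed

lemma U4: "lu0 (b \<odot> b') \<bullet> ((lu0 I \<otimes> Id (b \<odot> b')) \<bullet> mid C I b I b') = lu0 b \<otimes> lu0 b'"
  unfolding mid_X Xm_def LR
  by (simp add: tri'_t lu_rule lu_rule_t KB KB_t BU1 tri')

lemma U5: "ru0 (b \<odot> b') \<bullet> ((Id (b \<odot> b') \<otimes> lu0 I) \<bullet> mid C b I b' I) = ru0 b \<otimes> ru0 b'"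
proof -
  have r: "ru0 b' \<bullet> ((ru0 b' \<otimes> Id I) \<bullet> k) = ru0 b' \<bullet> (ru0 (b' \<odot> I) \<bullet> k)" if "Arr k" "Cd k = (b' \<odot> I) \<odot> I" for k
    using ru_nat0[of "ru0 b'", THEN tail, of k] that by simp
  show ?thesis unfolding mid_X Xm_def
    by (simp add: as'_nat_id12_t KA'_t triangle tri_t r ru_rule_t BU2 KA' lu_rule tri_peel)
qed

end

context BMC begin

lemma monoid_objD: assumes "monoid_obj C Q m u"
  shows "Arr m" "Dm m = Q \<odot> Q" "Cd m = Q" "Arr u" "Dm u = I" "Cd u = Q"
    "m \<bullet> (m \<otimes> Id Q) = m \<bullet> ((Id Q \<otimes> m) \<bullet> as Q Q Q)"
    "m \<bullet> (u \<otimes> Id Q) = lu0 Q" "m \<bullet> (Id Q \<otimes> u) = ru0 Q"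
  using assms unfolding monoid_obj_def hom_def by auto

lemma TM: assumes Q: "monoid_obj C Q m u" and P: "monoid_obj C P n v"
  shows "monoid_obj C (Q \<odot> P) (mu_tens C Q m P n) (unit_tens C u v)"
proof -
  note q = monoid_objD[OF Q] and p = monoid_objD[OF P]
  have F1a: "mid C Q P Q P \<bullet> ((m \<otimes> n) \<otimes> Id (Q \<odot> P)) = ((m \<otimes> Id Q) \<otimes> (n \<otimes> Id P)) \<bullet> mid C (Q \<odot> Q) (P \<odot> P) Q P"
    using F1[of m n "Id Q" "Id P"] q p by simp
  have F1b: "((Id Q \<otimes> m) \<otimes> (Id P \<otimes> n)) \<bullet> mid C Q P (Q \<odot> Q) (P \<odot> P) = mid C Q P Q P \<bullet> (Id (Q \<odot> P) \<otimes> (m \<otimes> n))"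
    using F1[of "Id Q" "Id P" m n] q p by simp
  have F1c: "mid C Q P Q P \<bullet> ((u \<otimes> v) \<otimes> Id (Q \<odot> P)) = ((u \<otimes> Id Q) \<otimes> (v \<otimes> Id P)) \<bullet> mid C I I Q P"
    using F1[of u v "Id Q" "Id P"] q p by simp
  have F1d: "mid C Q P Q P \<bullet> (Id (Q \<odot> P) \<otimes> (u \<otimes> v)) = ((Id Q \<otimes> u) \<otimes> (Id P \<otimes> v)) \<bullet> mid C Q P I I"
    using F1[of "Id Q" "Id P" u v] q p by simp
  have ty: "mu_tens C Q m P n \<in> hom C ((Q \<odot> P) \<odot> (Q \<odot> P)) (Q \<odot> P)" "unit_tens C u v \<in> hom C I (Q \<odot> P)"
    unfolding mu_tens_def unit_tens_def hom_def using q p by simp_all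
  have as1: "mu_tens C Q m P n \<bullet> (mu_tens C Q m P n \<otimes> Id (Q \<odot> P))
     = mu_tens C Q m P n \<bullet> ((Id (Q \<odot> P) \<otimes> mu_tens C Q m P n) \<bullet> as (Q \<odot> P) (Q \<odot> P) (Q \<odot> P))"
  proof -
    have "mu_tens C Q m P n \<bullet> (mu_tens C Q m P n \<otimes> Id (Q \<odot> P))
      = (m \<otimes> n) \<bullet> (mid C Q P Q P \<bullet> (((m \<otimes> n) \<otimes> Id (Q \<odot> P)) \<bullet> (mid C Q P Q P \<otimes> Id (Q \<odot> P))))"
      unfolding mu_tens_def using q p by simp
    also have "\<dots> = (m \<otimes> n) \<bullet> (((m \<otimes> Id Q) \<otimes> (n \<otimes> Id P)) \<bullet> (mid C (Q \<odot> Q) (P \<odot> P) Q P \<bullet> (mid C Q P Q P \<otimes> Id (Q \<odot> P))))"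
      using q p by (simp only: F1a[THEN tail] TY ty_mid, (simp)?)
    also have "\<dots> = ((m \<bullet> (Id Q \<otimes> m)) \<otimes> (n \<bullet> (Id P \<otimes> n))) \<bullet> ((as Q Q Q \<otimes> as P P P) \<bullet> (mid C (Q \<odot> Q) (P \<odot> P) Q P \<bullet> (mid C Q P Q P \<otimes> Id (Q \<odot> P))))"
      using q p by simp
    also have "\<dots> = ((m \<bullet> (Id Q \<otimes> m)) \<otimes> (n \<bullet> (Id P \<otimes> n))) \<bullet> (mid C Q P (Q \<odot> Q) (P \<odot> P) \<bullet> ((Id (Q \<odot> P) \<otimes> mid C Q P Q P) \<bullet> as (Q \<odot> P) (Q \<odot> P) (Q \<odot> P)))"
      by (simp only: H1)
    also have "\<dots> = (m \<otimes> n) \<bullet> (((Id Q \<otimes> m) \<otimes> (Id P \<otimes> n)) \<bullet> (mid C Q P (Q \<odot> Q) (P \<odot> P) \<bullet> ((Id (Q \<odot> P) \<otimes> mid C Q P Q P) \<bullet> as (Q \<odot> P) (Q \<odot> P) (Q \<odot> P))))"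
      using q p by simp
    also have "\<dots> = (m \<otimes> n) \<bullet> (mid C Q P Q P \<bullet> ((Id (Q \<odot> P) \<otimes> (m \<otimes> n)) \<bullet> ((Id (Q \<odot> P) \<otimes> mid C Q P Q P) \<bullet> as (Q \<odot> P) (Q \<odot> P) (Q \<odot> P))))"
      using q p by (simp only: F1b[THEN tail] TY ty_mid, (simp)?)
    also have "\<dots> = mu_tens C Q m P n \<bullet> ((Id (Q \<odot> P) \<otimes> mu_tens C Q m P n) \<bullet> as (Q \<odot> P) (Q \<odot> P) (Q \<odot> P))"
      unfolding mu_tens_def using q p by simp
    finally show ?thesis .
  qed
  have lu1: "mu_tens C Q m P n \<bullet> (unit_tens C u v \<otimes> Id (Q \<odot> P)) = lu0 (Q \<odot> P)"
  proof -
    have "mu_tens C Q m P n \<bullet> (unit_tens C u v \<otimes> Id (Q \<odot> P))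
      = (m \<otimes> n) \<bullet> (mid C Q P Q P \<bullet> (((u \<otimes> v) \<otimes> Id (Q \<odot> P)) \<bullet> (lu' I \<otimes> Id (Q \<odot> P))))"
      unfolding mu_tens_def unit_tens_def using q p by simp
    also have "\<dots> = (m \<otimes> n) \<bullet> (((u \<otimes> Id Q) \<otimes> (v \<otimes> Id P)) \<bullet> (mid C I I Q P \<bullet> (lu' I \<otimes> Id (Q \<odot> P))))"
      using q p by (simp only: F1c[THEN tail] TY ty_mid, (simp)?)
    also have "\<dots> = ((lu0 Q \<otimes> lu0 P) \<bullet> mid C I I Q P) \<bullet> (lu' I \<otimes> Id (Q \<odot> P))"
      using q p by simp
    also have "\<dots> = lu0 (Q \<odot> P)" by (simp add: U1)
    finally show ?thesis .
  qed
  have ru1: "mu_tens C Q m P n \<bullet> (Id (Q \<odot> P) \<otimes> unit_tens C u v) = ru0 (Q \<odot> P)"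
  proof -
    have "mu_tens C Q m P n \<bullet> (Id (Q \<odot> P) \<otimes> unit_tens C u v)
      = (m \<otimes> n) \<bullet> (mid C Q P Q P \<bullet> ((Id (Q \<odot> P) \<otimes> (u \<otimes> v)) \<bullet> (Id (Q \<odot> P) \<otimes> lu' I)))"
      unfolding mu_tens_def unit_tens_def using q p by simp
    also have "\<dots> = (m \<otimes> n) \<bullet> (((Id Q \<otimes> u) \<otimes> (Id P \<otimes> v)) \<bullet> (mid C Q P I I \<bullet> (Id (Q \<odot> P) \<otimes> lu' I)))"
      using q p by (simp only: F1d[THEN tail] TY ty_mid, (simp)?)
    also have "\<dots> = ((ru0 Q \<otimes> ru0 P) \<bullet> mid C Q P I I) \<bullet> (Id (Q \<odot> P) \<otimes> lu' I)"
      using q p by simp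
    also have "\<dots> = ru0 (Q \<odot> P)" by (simp add: U2)
    finally show ?thesis .
  qed
  show ?thesis unfolding monoid_obj_def using ty as1 lu1 ru1 by blast
qed

lemma monoid_homD: assumes "monoid_hom C Q1 m1 u1 Q2 m2 u2 f"
  shows "Arr f" "Dm f = Q1" "Cd f = Q2" "f \<bullet> m1 = m2 \<bullet> (f \<otimes> f)" "f \<bullet> u1 = u2"
  using assms unfolding monoid_hom_def hom_def by auto

lemma MH_tens: assumes Q1: "monoid_obj C Q1 m1 u1" and Q2: "monoid_obj C Q2 m2 u2"
  and P1: "monoid_obj C P1 n1 v1" and P2: "monoid_obj C P2 n2 v2"
  and f: "monoid_hom C Q1 m1 u1 P1 n1 v1 f" and g: "monoid_hom C Q2 m2 u2 P2 n2 v2 g"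
  shows "monoid_hom C (Q1 \<odot> Q2) (mu_tens C Q1 m1 Q2 m2) (unit_tens C u1 u2) (P1 \<odot> P2) (mu_tens C P1 n1 P2 n2) (unit_tens C v1 v2) (f \<otimes> g)"
proof -
  note q1 = monoid_objD[OF Q1] and q2 = monoid_objD[OF Q2] and p1 = monoid_objD[OF P1] and p2 = monoid_objD[OF P2]
  note ff = monoid_homD[OF f] and gg = monoid_homD[OF g]
  have n: "mid C P1 P2 P1 P2 \<bullet> ((f \<otimes> g) \<otimes> (f \<otimes> g)) = ((f \<otimes> f) \<otimes> (g \<otimes> g)) \<bullet> mid C Q1 Q2 Q1 Q2"
    using F1[of f g f g] ff gg by simp
  have "(f \<otimes> g) \<bullet> mu_tens C Q1 m1 Q2 m2 = ((f \<bullet> m1) \<otimes> (g \<bullet> m2)) \<bullet> mid C Q1 Q2 Q1 Q2"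
    unfolding mu_tens_def using q1 q2 ff gg by simp
  also have "\<dots> = ((n1 \<bullet> (f \<otimes> f)) \<otimes> (n2 \<bullet> (g \<otimes> g))) \<bullet> mid C Q1 Q2 Q1 Q2" using ff gg by simp
  also have "\<dots> = (n1 \<otimes> n2) \<bullet> (((f \<otimes> f) \<otimes> (g \<otimes> g)) \<bullet> mid C Q1 Q2 Q1 Q2)" using ff gg p1 p2 by simp
  also have "\<dots> = (n1 \<otimes> n2) \<bullet> (mid C P1 P2 P1 P2 \<bullet> ((f \<otimes> g) \<otimes> (f \<otimes> g)))" by (simp only: n)
  also have "\<dots> = mu_tens C P1 n1 P2 n2 \<bullet> ((f \<otimes> g) \<otimes> (f \<otimes> g))"
    unfolding mu_tens_def using ff gg p1 p2 by simp
  finally have 1: "(f \<otimes> g) \<bullet> mu_tens C Q1 m1 Q2 m2 = mu_tens C P1 n1 P2 n2 \<bullet> ((f \<otimes> g) \<otimes> (f \<otimes> g))" .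
  have 2: "(f \<otimes> g) \<bullet> unit_tens C u1 u2 = unit_tens C v1 v2"
    unfolding unit_tens_def using q1 q2 ff gg by simp
  show ?thesis unfolding monoid_hom_def hom_def using 1 2 ff gg by simp
qed

lemma MH_comp: assumes Q1: "monoid_obj C Q1 m1 u1" and Q2: "monoid_obj C Q2 m2 u2" and Q3: "monoid_obj C Q3 m3 u3"
  and f: "monoid_hom C Q1 m1 u1 Q2 m2 u2 f" and g: "monoid_hom C Q2 m2 u2 Q3 m3 u3 g"
  shows "monoid_hom C Q1 m1 u1 Q3 m3 u3 (g \<bullet> f)"
proof -
  note q1 = monoid_objD[OF Q1] and q2 = monoid_objD[OF Q2] and q3 = monoid_objD[OF Q3]
  note ff = monoid_homD[OF f] and gg = monoid_homD[OF g]
  have "(g \<bullet> f) \<bullet> m1 = g \<bullet> (f \<bullet> m1)" using q1 ff gg by simp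
  also have "\<dots> = g \<bullet> (m2 \<bullet> (f \<otimes> f))" by (simp only: ff(4))
  also have "\<dots> = m3 \<bullet> ((g \<otimes> g) \<bullet> (f \<otimes> f))" by (rule gg(4)[THEN tail]) (use q2 q3 ff gg in simp_all)
  also have "\<dots> = m3 \<bullet> ((g \<bullet> f) \<otimes> (g \<bullet> f))" using q3 ff gg by simp
  finally have 1: "(g \<bullet> f) \<bullet> m1 = m3 \<bullet> ((g \<bullet> f) \<otimes> (g \<bullet> f))" .
  have 2: "(g \<bullet> f) \<bullet> u1 = u3" using q1 ff gg by simp
  show ?thesis unfolding monoid_hom_def hom_def using 1 2 ff gg by simp
qed

lemma MH_id: assumes Q: "monoid_obj C Q m u" shows "monoid_hom C Q m u Q m u (Id Q)"
  using monoid_objD[OF Q] unfolding monoid_hom_def hom_def by simp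

lemma U3: "as I I I \<bullet> ((lu' I \<otimes> Id I) \<bullet> lu' I) = (Id I \<otimes> lu' I) \<bullet> lu' I"
proof -
  have k: "(Id I \<otimes> lu0 I) \<bullet> as I I I = lu0 I \<otimes> Id I" using KB[of I I] LI by simp
  have "(Id I \<otimes> lu0 I) \<bullet> (as I I I \<bullet> ((lu' I \<otimes> Id I) \<bullet> lu' I)) = (Id I \<otimes> lu0 I) \<bullet> ((Id I \<otimes> lu' I) \<bullet> lu' I)"
    by (simp add: k[THEN tail1])
  thus ?thesis by (rule mono[where q = "Id I \<otimes> lu' I"]) simp_all
qed

lemma MH_as: assumes Q1: "monoid_obj C Q1 m1 u1" and Q2: "monoid_obj C Q2 m2 u2" and Q3: "monoid_obj C Q3 m3 u3"
  shows "monoid_hom C ((Q1 \<odot> Q2) \<odot> Q3) (mu_tens C (Q1 \<odot> Q2) (mu_tens C Q1 m1 Q2 m2) Q3 m3) (unit_tens C (unit_tens C u1 u2) u3)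
     (Q1 \<odot> (Q2 \<odot> Q3)) (mu_tens C Q1 m1 (Q2 \<odot> Q3) (mu_tens C Q2 m2 Q3 m3)) (unit_tens C u1 (unit_tens C u2 u3)) (as Q1 Q2 Q3)"
proof -
  note q1 = monoid_objD[OF Q1] and q2 = monoid_objD[OF Q2] and q3 = monoid_objD[OF Q3]
  have n: "as Q1 Q2 Q3 \<bullet> ((m1 \<otimes> m2) \<otimes> m3) = (m1 \<otimes> (m2 \<otimes> m3)) \<bullet> as (Q1 \<odot> Q1) (Q2 \<odot> Q2) (Q3 \<odot> Q3)"
    using as_nat0[of m1 m2 m3] q1 q2 q3 by simp
  have "as Q1 Q2 Q3 \<bullet> mu_tens C (Q1 \<odot> Q2) (mu_tens C Q1 m1 Q2 m2) Q3 m3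
     = as Q1 Q2 Q3 \<bullet> (((m1 \<otimes> m2) \<otimes> m3) \<bullet> ((mid C Q1 Q2 Q1 Q2 \<otimes> Id (Q3 \<odot> Q3)) \<bullet> mid C (Q1 \<odot> Q2) Q3 (Q1 \<odot> Q2) Q3))"
    unfolding mu_tens_def using q1 q2 q3 by simp
  also have "\<dots> = (m1 \<otimes> (m2 \<otimes> m3)) \<bullet> (as (Q1 \<odot> Q1) (Q2 \<odot> Q2) (Q3 \<odot> Q3) \<bullet> ((mid C Q1 Q2 Q1 Q2 \<otimes> Id (Q3 \<odot> Q3)) \<bullet> mid C (Q1 \<odot> Q2) Q3 (Q1 \<odot> Q2) Q3))"
    using q1 q2 q3 by (simp only: n[THEN tail] TY ty_mid, (simp)?)
  also have "\<dots> = (m1 \<otimes> (m2 \<otimes> m3)) \<bullet> ((Id (Q1 \<odot> Q1) \<otimes> mid C Q2 Q3 Q2 Q3) \<bullet> (mid C Q1 (Q2 \<odot> Q3) Q1 (Q2 \<odot> Q3) \<bullet> (as Q1 Q2 Q3 \<otimes> as Q1 Q2 Q3)))"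
    by (simp only: K1)
  also have "\<dots> = mu_tens C Q1 m1 (Q2 \<odot> Q3) (mu_tens C Q2 m2 Q3 m3) \<bullet> (as Q1 Q2 Q3 \<otimes> as Q1 Q2 Q3)"
    unfolding mu_tens_def using q1 q2 q3 by simp
  finally have 1: "as Q1 Q2 Q3 \<bullet> mu_tens C (Q1 \<odot> Q2) (mu_tens C Q1 m1 Q2 m2) Q3 m3 = mu_tens C Q1 m1 (Q2 \<odot> Q3) (mu_tens C Q2 m2 Q3 m3) \<bullet> (as Q1 Q2 Q3 \<otimes> as Q1 Q2 Q3)" .
  have n2: "as Q1 Q2 Q3 \<bullet> ((u1 \<otimes> u2) \<otimes> u3) = (u1 \<otimes> (u2 \<otimes> u3)) \<bullet> as I I I"
    using as_nat0[of u1 u2 u3] q1 q2 q3 by simp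
  have "as Q1 Q2 Q3 \<bullet> unit_tens C (unit_tens C u1 u2) u3 = as Q1 Q2 Q3 \<bullet> (((u1 \<otimes> u2) \<otimes> u3) \<bullet> ((lu' I \<otimes> Id I) \<bullet> lu' I))"
    unfolding unit_tens_def using q1 q2 q3 by simp
  also have "\<dots> = (u1 \<otimes> (u2 \<otimes> u3)) \<bullet> (as I I I \<bullet> ((lu' I \<otimes> Id I) \<bullet> lu' I))"
    using q1 q2 q3 by (simp only: n2[THEN tail] TY, (simp)?)
  also have "\<dots> = (u1 \<otimes> (u2 \<otimes> u3)) \<bullet> ((Id I \<otimes> lu' I) \<bullet> lu' I)" by (simp only: U3)
  also have "\<dots> = unit_tens C u1 (unit_tens C u2 u3)" unfolding unit_tens_def using q1 q2 q3 by simp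
  finally have 2: "as Q1 Q2 Q3 \<bullet> unit_tens C (unit_tens C u1 u2) u3 = unit_tens C u1 (unit_tens C u2 u3)" .
  show ?thesis unfolding monoid_hom_def hom_def using 1 2 by simp
qed

lemma MH_lu: assumes Bm: "monoid_obj C B m u"
  shows "monoid_hom C (I \<odot> B) (mu_tens C I (lu0 I) B m) (unit_tens C (Id I) u) B m u (lu0 B)"
proof -
  note b = monoid_objD[OF Bm]
  have "lu0 B \<bullet> mu_tens C I (lu0 I) B m = lu0 B \<bullet> ((Id I \<otimes> m) \<bullet> ((lu0 I \<otimes> Id (B \<odot> B)) \<bullet> mid C I B I B))"
    unfolding mu_tens_def using b by simp
  also have "\<dots> = m \<bullet> (lu0 (B \<odot> B) \<bullet> ((lu0 I \<otimes> Id (B \<odot> B)) \<bullet> mid C I B I B))"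
    using lu_rule_t[of m B "(lu0 I \<otimes> Id (B \<odot> B)) \<bullet> mid C I B I B"] b by simp
  also have "\<dots> = m \<bullet> (lu0 B \<otimes> lu0 B)" by (simp only: U4)
  finally have 1: "lu0 B \<bullet> mu_tens C I (lu0 I) B m = m \<bullet> (lu0 B \<otimes> lu0 B)" .
  have 2: "lu0 B \<bullet> unit_tens C (Id I) u = u" unfolding unit_tens_def using b by (simp add: lu_rule_t)
  show ?thesis unfolding monoid_hom_def hom_def using 1 2 by simp
qed

lemma MH_ru: assumes Bm: "monoid_obj C B m u"
  shows "monoid_hom C (B \<odot> I) (mu_tens C B m I (lu0 I)) (unit_tens C u (Id I)) B m u (ru0 B)"
proof -
  note b = monoid_objD[OF Bm]
  have "ru0 B \<bullet> mu_tens C B m I (lu0 I) = ru0 B \<bullet> ((m \<otimes> Id I) \<bullet> ((Id (B \<odot> B) \<otimes> lu0 I) \<bullet> mid C B I B I))"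
    unfolding mu_tens_def using b by simp
  also have "\<dots> = m \<bullet> (ru0 (B \<odot> B) \<bullet> ((Id (B \<odot> B) \<otimes> lu0 I) \<bullet> mid C B I B I))"
    using ru_rule_t[of m B "(Id (B \<odot> B) \<otimes> lu0 I) \<bullet> mid C B I B I"] b by simp
  also have "\<dots> = m \<bullet> (ru0 B \<otimes> ru0 B)" by (simp only: U5)
  finally have 1: "ru0 B \<bullet> mu_tens C B m I (lu0 I) = m \<bullet> (ru0 B \<otimes> ru0 B)" .
  have 2: "ru0 B \<bullet> unit_tens C u (Id I) = u" unfolding unit_tens_def using b by (simp add: ru_rule_t LR)
  show ?thesis unfolding monoid_hom_def hom_def using 1 2 by simp
qed

end

context BMC begin

lemma coassoc_diag:
  assumes r: "Arr r" "Dm r = A" "Cd r = A \<odot> B" and d: "Arr d" "Dm d = B" "Cd d = B \<odot> B"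
    and dr: "(Id A \<otimes> d) \<bullet> r = as A B B \<bullet> ((r \<otimes> Id B) \<bullet> r)"
  shows "(Id A \<otimes> ((Id B \<otimes> d) \<bullet> d)) \<bullet> r = (Id A \<otimes> (as B B B \<bullet> ((d \<otimes> Id B) \<bullet> d))) \<bullet> r"
proof -
  have dr_t: "(Id A \<otimes> d) \<bullet> (r \<bullet> k) = as A B B \<bullet> ((r \<otimes> Id B) \<bullet> (r \<bullet> k))" if "Arr k" "Cd k = A" for k
    using dr[THEN tail, of k] that r d by simp
  have "(Id A \<otimes> ((Id B \<otimes> d) \<bullet> d)) \<bullet> r = (Id A \<otimes> (Id B \<otimes> d)) \<bullet> ((Id A \<otimes> d) \<bullet> r)"
    using r d by simp
  also have "\<dots> = (Id A \<otimes> (Id B \<otimes> d)) \<bullet> (as A B B \<bullet> ((r \<otimes> Id B) \<bullet> r))" by (simp only: dr)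
  also have "\<dots> = as A B (B \<odot> B) \<bullet> ((Id (A \<odot> B) \<otimes> d) \<bullet> ((r \<otimes> Id B) \<bullet> r))"
    using as_nat_id12_t[of d "B \<odot> B" "(r \<otimes> Id B) \<bullet> r" A B] r d by simp
  also have "\<dots> = as A B (B \<odot> B) \<bullet> ((r \<otimes> Id (B \<odot> B)) \<bullet> ((Id A \<otimes> d) \<bullet> r))"
    using r d by simp
  also have "\<dots> = as A B (B \<odot> B) \<bullet> ((r \<otimes> Id (B \<odot> B)) \<bullet> (as A B B \<bullet> ((r \<otimes> Id B) \<bullet> r)))"
    by (simp only: dr)
  finally have L: "(Id A \<otimes> ((Id B \<otimes> d) \<bullet> d)) \<bullet> r = as A B (B \<odot> B) \<bullet> ((r \<otimes> Id (B \<odot> B)) \<bullet> (as A B B \<bullet> ((r \<otimes> Id B) \<bullet> r)))" .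
  have n1: "(Id A \<otimes> (d \<otimes> Id B)) \<bullet> as A B B = as A (B \<odot> B) B \<bullet> ((Id A \<otimes> d) \<otimes> Id B)"
    using as_nat0[of "Id A" d "Id B"] d by simp
  have n2: "as (A \<odot> B) B B \<bullet> ((r \<otimes> Id B) \<otimes> Id B) = (r \<otimes> Id (B \<odot> B)) \<bullet> as A B B"
    using as_nat0[of r "Id B" "Id B"] r by simp
  have "(Id A \<otimes> (as B B B \<bullet> ((d \<otimes> Id B) \<bullet> d))) \<bullet> r = (Id A \<otimes> as B B B) \<bullet> ((Id A \<otimes> (d \<otimes> Id B)) \<bullet> ((Id A \<otimes> d) \<bullet> r))"
    using r d by simp
  also have "\<dots> = (Id A \<otimes> as B B B) \<bullet> ((Id A \<otimes> (d \<otimes> Id B)) \<bullet> (as A B B \<bullet> ((r \<otimes> Id B) \<bullet> r)))"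
    by (simp only: dr)
  also have "\<dots> = (Id A \<otimes> as B B B) \<bullet> (as A (B \<odot> B) B \<bullet> (((Id A \<otimes> d) \<otimes> Id B) \<bullet> ((r \<otimes> Id B) \<bullet> r)))"
    by (simp only: n1[THEN tail] TY r d, (simp add: r d)?)
  also have "\<dots> = (Id A \<otimes> as B B B) \<bullet> (as A (B \<odot> B) B \<bullet> ((((Id A \<otimes> d) \<bullet> r) \<otimes> Id B) \<bullet> r))"
    using r d by simp
  also have "\<dots> = (Id A \<otimes> as B B B) \<bullet> (as A (B \<odot> B) B \<bullet> (((as A B B \<bullet> ((r \<otimes> Id B) \<bullet> r)) \<otimes> Id B) \<bullet> r))"
    by (simp only: dr)
  also have "\<dots> = (Id A \<otimes> as B B B) \<bullet> (as A (B \<odot> B) B \<bullet> ((as A B B \<otimes> Id B) \<bullet> (((r \<otimes> Id B) \<otimes> Id B) \<bullet> ((r \<otimes> Id B) \<bullet> r))))"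
    using r d by simp
  also have "\<dots> = as A B (B \<odot> B) \<bullet> (as (A \<odot> B) B B \<bullet> (((r \<otimes> Id B) \<otimes> Id B) \<bullet> ((r \<otimes> Id B) \<bullet> r)))"
    by (simp only: pent_rev_t TY r d, (simp add: r d)?)
  also have "\<dots> = as A B (B \<odot> B) \<bullet> ((r \<otimes> Id (B \<odot> B)) \<bullet> (as A B B \<bullet> ((r \<otimes> Id B) \<bullet> r)))"
    by (simp only: n2[THEN tail] TY r d, (simp add: r d)?)
  finally show ?thesis using L by simp
qed

lemma counit_l_diag:
  assumes r: "Arr r" "Dm r = A" "Cd r = A \<odot> B" and d: "Arr d" "Dm d = B" "Cd d = B \<odot> B"
    and e: "Arr e" "Dm e = B" "Cd e = I"
    and dr: "(Id A \<otimes> d) \<bullet> r = as A B B \<bullet> ((r \<otimes> Id B) \<bullet> r)"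
    and er: "(Id A \<otimes> e) \<bullet> r = ru' A"
  shows "(Id A \<otimes> (lu0 B \<bullet> ((e \<otimes> Id B) \<bullet> d))) \<bullet> r = r"
proof -
  have n1: "(Id A \<otimes> (e \<otimes> Id B)) \<bullet> as A B B = as A I B \<bullet> ((Id A \<otimes> e) \<otimes> Id B)"
    using as_nat0[of "Id A" e "Id B"] e by simp
  have "(Id A \<otimes> (lu0 B \<bullet> ((e \<otimes> Id B) \<bullet> d))) \<bullet> r = (Id A \<otimes> lu0 B) \<bullet> ((Id A \<otimes> (e \<otimes> Id B)) \<bullet> ((Id A \<otimes> d) \<bullet> r))"
    using r d e by simp
  also have "\<dots> = (Id A \<otimes> lu0 B) \<bullet> ((Id A \<otimes> (e \<otimes> Id B)) \<bullet> (as A B B \<bullet> ((r \<otimes> Id B) \<bullet> r)))"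
    by (simp only: dr)
  also have "\<dots> = (Id A \<otimes> lu0 B) \<bullet> (as A I B \<bullet> (((Id A \<otimes> e) \<otimes> Id B) \<bullet> ((r \<otimes> Id B) \<bullet> r)))"
    by (simp only: n1[THEN tail] TY r d e, (simp add: r d e)?)
  also have "\<dots> = (Id A \<otimes> lu0 B) \<bullet> (as A I B \<bullet> ((((Id A \<otimes> e) \<bullet> r) \<otimes> Id B) \<bullet> r))"
    using r d e by simp
  also have "\<dots> = (Id A \<otimes> lu0 B) \<bullet> (as A I B \<bullet> ((ru' A \<otimes> Id B) \<bullet> r))"
    by (simp only: er)
  also have "\<dots> = r" using r by (simp add: tri_t)
  finally show ?thesis .
qed

lemma counit_r_diag:
  assumes r: "Arr r" "Dm r = A" "Cd r = A \<odot> B" and d: "Arr d" "Dm d = B" "Cd d = B \<odot> B"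
    and e: "Arr e" "Dm e = B" "Cd e = I"
    and dr: "(Id A \<otimes> d) \<bullet> r = as A B B \<bullet> ((r \<otimes> Id B) \<bullet> r)"
    and er: "(Id A \<otimes> e) \<bullet> r = ru' A"
  shows "(Id A \<otimes> (ru0 B \<bullet> ((Id B \<otimes> e) \<bullet> d))) \<bullet> r = r"
proof -
  have "(Id A \<otimes> (ru0 B \<bullet> ((Id B \<otimes> e) \<bullet> d))) \<bullet> r = (Id A \<otimes> ru0 B) \<bullet> ((Id A \<otimes> (Id B \<otimes> e)) \<bullet> ((Id A \<otimes> d) \<bullet> r))"
    using r d e by simp
  also have "\<dots> = (Id A \<otimes> ru0 B) \<bullet> ((Id A \<otimes> (Id B \<otimes> e)) \<bullet> (as A B B \<bullet> ((r \<otimes> Id B) \<bullet> r)))"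
    by (simp only: dr)
  also have "\<dots> = (Id A \<otimes> ru0 B) \<bullet> (as A B I \<bullet> ((Id (A \<odot> B) \<otimes> e) \<bullet> ((r \<otimes> Id B) \<bullet> r)))"
    using as_nat_id12_t[of e I "(r \<otimes> Id B) \<bullet> r" A B] r d e by simp
  also have "\<dots> = (Id A \<otimes> ru0 B) \<bullet> (as A B I \<bullet> ((r \<otimes> Id I) \<bullet> ((Id A \<otimes> e) \<bullet> r)))"
    using r d e by simp
  also have "\<dots> = (Id A \<otimes> ru0 B) \<bullet> (as A B I \<bullet> ((r \<otimes> Id I) \<bullet> ru' A))"
    by (simp only: er)
  also have "\<dots> = r" using r by (simp add: KA[THEN tail1] ru_rule_t)
  finally show ?thesis .
qed

lemma comult_diag:
  assumes r: "Arr r" "Dm r = A" "Cd r = A \<odot> B" and r': "Arr r'" "Dm r' = A" "Cd r' = A \<odot> B'"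
    and f: "Arr f" "Dm f = B" "Cd f = B'"
    and fr: "(Id A \<otimes> f) \<bullet> r = r'"
  shows "(Id A \<otimes> (f \<otimes> f)) \<bullet> (as A B B \<bullet> ((r \<otimes> Id B) \<bullet> r)) = as A B' B' \<bullet> ((r' \<otimes> Id B') \<bullet> r')"
proof -
  have n: "(Id A \<otimes> (f \<otimes> f)) \<bullet> as A B B = as A B' B' \<bullet> ((Id A \<otimes> f) \<otimes> f)"
    using as_nat0[of "Id A" f f] f by simp
  have "(Id A \<otimes> (f \<otimes> f)) \<bullet> (as A B B \<bullet> ((r \<otimes> Id B) \<bullet> r)) = as A B' B' \<bullet> (((Id A \<otimes> f) \<otimes> f) \<bullet> ((r \<otimes> Id B) \<bullet> r))"
    by (simp only: n[THEN tail] TY r f, (simp add: r f)?)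
  also have "\<dots> = as A B' B' \<bullet> (((Id A \<otimes> f) \<bullet> r) \<otimes> Id B') \<bullet> ((Id A \<otimes> f) \<bullet> r)"
    using r f by simp
  also have "\<dots> = as A B' B' \<bullet> ((r' \<otimes> Id B') \<bullet> r')" using r' by (simp add: fr)
  finally show ?thesis .
qed

lemma ru'_uniq: "Arr x \<Longrightarrow> Dm x = A \<Longrightarrow> Cd x = A \<odot> I \<Longrightarrow> ru0 A \<bullet> x = Id A \<Longrightarrow> x = ru' A"
  by (rule mono[where p = "ru0 A" and q = "ru' A"]) simp_all

lemma main:
  fixes Om :: "'w set" and s t :: "'w \<Rightarrow> nat"
    and ops :: "'w \<Rightarrow> 'm" and A :: 'o
    and D :: "('o \<times> 'm \<times> 'm \<times> 'm) set"
    and B0 :: 'o and m0 u0 r0 :: 'm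
  assumes magma: "omega_magma C Om s t A ops"
    and D_sub: "\<forall>(Q, m, u, r) \<in> D. comeasuring C Om s t ops ops A A Q m u r"
    and init_in: "(B0, m0, u0, r0) \<in> D"
    and init: "\<forall>(Q, m, u, r) \<in> D. \<exists>!\<phi>. monoid_hom C B0 m0 u0 Q m u \<phi>
                  \<and> cmp C (tnm C (idt C A) \<phi>) r0 = r"
    and coarsen: "\<forall>(Q1, m1, u1, r) \<in> D. \<forall>Q2 m2 u2 \<tau>.
                  monoid_obj C Q2 m2 u2 \<and> monoid_hom C Q1 m1 u1 Q2 m2 u2 \<tau>
                  \<longrightarrow> (Q2, m2, u2, cmp C (tnm C (idt C A) \<tau>) r) \<in> D"
    and unit_in: "(un C, lu C (un C), idt C (un C), inv_arr C (ru C A)) \<in> D"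
    and sq_in: "(tns C B0 B0, mu_tens C B0 m0 B0 m0, unit_tens C u0 u0,
                 cmp C (asc C A B0 B0) (cmp C (tnm C r0 (idt C B0)) r0)) \<in> D"
  shows "(\<exists>!(d, e). coaction C Om s t ops A B0 m0 u0 d e r0) \<and>
         (\<forall>d e. coaction C Om s t ops A B0 m0 u0 d e r0 \<longrightarrow>
            (\<forall>B m u d' e' r. coaction C Om s t ops A B m u d' e' r \<and> (B, m, u, r) \<in> D \<longrightarrow>
               (\<exists>!\<phi>. bimonoid_hom C B0 m0 u0 d e B m u d' e' \<phi>
                      \<and> cmp C (tnm C (idt C A) \<phi>) r0 = r)))"
proof -
  have Dc: "comeasuring C Om s t ops ops A A Q m u r" if "(Q, m, u, r) \<in> D" for Q m u r
    using bspec[OF D_sub that] by simp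
  have Dmon: "monoid_obj C Q m u" if "(Q, m, u, r) \<in> D" for Q m u r
    using Dc[OF that] unfolding comeasuring_def by blast
  have Dr: "Arr r \<and> Dm r = A \<and> Cd r = A \<odot> Q" if "(Q, m, u, r) \<in> D" for Q m u r
    using Dc[OF that] unfolding comeasuring_def hom_def by blast
  have Dex: "\<exists>!\<phi>. monoid_hom C B0 m0 u0 Q m u \<phi> \<and> (Id A \<otimes> \<phi>) \<bullet> r0 = r" if "(Q, m, u, r) \<in> D" for Q m u r
    using bspec[OF init that] by simp
  have Dun: "\<phi>1 = \<phi>2" if "(Q, m, u, r) \<in> D" "monoid_hom C B0 m0 u0 Q m u \<phi>1" "(Id A \<otimes> \<phi>1) \<bullet> r0 = r"
     "monoid_hom C B0 m0 u0 Q m u \<phi>2" "(Id A \<otimes> \<phi>2) \<bullet> r0 = r" for Q m u r \<phi>1 \<phi>2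
  proof -
    have "\<phi>1 = (THE \<phi>. monoid_hom C B0 m0 u0 Q m u \<phi> \<and> (Id A \<otimes> \<phi>) \<bullet> r0 = r)"
      using the1_equality[OF Dex[OF that(1)]] that(2,3) by simp
    also have "\<dots> = \<phi>2" using the1_equality[OF Dex[OF that(1)]] that(4,5) by simp
    finally show ?thesis .
  qed
  have Dco: "(Q2, m2, u2, (Id A \<otimes> \<tau>) \<bullet> r) \<in> D"
    if "(Q1, m1, u1, r) \<in> D" "monoid_obj C Q2 m2 u2" "monoid_hom C Q1 m1 u1 Q2 m2 u2 \<tau>" for Q1 m1 u1 r Q2 m2 u2 \<tau>
    using bspec[OF coarsen that(1)] that(2,3) by simp
  have B0m: "monoid_obj C B0 m0 u0" by (rule Dmon[OF init_in])
  have r0: "Arr r0" "Dm r0 = A" "Cd r0 = A \<odot> B0" using Dr[OF init_in] by auto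
  have Im: "monoid_obj C I (lu0 I) (Id I)" by (rule Dmon[OF unit_in])
  have B2m: "monoid_obj C (B0 \<odot> B0) (mu_tens C B0 m0 B0 m0) (unit_tens C u0 u0)" by (rule TM[OF B0m B0m])
  obtain d where d: "monoid_hom C B0 m0 u0 (B0 \<odot> B0) (mu_tens C B0 m0 B0 m0) (unit_tens C u0 u0) d"
      "(Id A \<otimes> d) \<bullet> r0 = as A B0 B0 \<bullet> ((r0 \<otimes> Id B0) \<bullet> r0)"
    using Dex[OF sq_in] by blast
  obtain e where e: "monoid_hom C B0 m0 u0 I (lu0 I) (Id I) e" "(Id A \<otimes> e) \<bullet> r0 = ru' A"
    using Dex[OF unit_in] by blast
  note dd = monoid_homD[OF d(1)] and ee = monoid_homD[OF e(1)]
  have coassoc: "as B0 B0 B0 \<bullet> ((d \<otimes> Id B0) \<bullet> d) = (Id B0 \<otimes> d) \<bullet> d"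
  proof -
    have Tm: "monoid_obj C (B0 \<odot> (B0 \<odot> B0)) (mu_tens C B0 m0 (B0 \<odot> B0) (mu_tens C B0 m0 B0 m0)) (unit_tens C u0 (unit_tens C u0 u0))"
      by (rule TM[OF B0m B2m])
    have T'm: "monoid_obj C ((B0 \<odot> B0) \<odot> B0) (mu_tens C (B0 \<odot> B0) (mu_tens C B0 m0 B0 m0) B0 m0) (unit_tens C (unit_tens C u0 u0) u0)"
      by (rule TM[OF B2m B0m])
    have h1: "monoid_hom C B0 m0 u0 (B0 \<odot> (B0 \<odot> B0)) (mu_tens C B0 m0 (B0 \<odot> B0) (mu_tens C B0 m0 B0 m0)) (unit_tens C u0 (unit_tens C u0 u0)) ((Id B0 \<otimes> d) \<bullet> d)"
      by (rule MH_comp[OF B0m B2m Tm d(1) MH_tens[OF B0m B0m B0m B2m MH_id[OF B0m] d(1)]])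
    have h2: "monoid_hom C B0 m0 u0 (B0 \<odot> (B0 \<odot> B0)) (mu_tens C B0 m0 (B0 \<odot> B0) (mu_tens C B0 m0 B0 m0)) (unit_tens C u0 (unit_tens C u0 u0)) (as B0 B0 B0 \<bullet> ((d \<otimes> Id B0) \<bullet> d))"
      by (rule MH_comp[OF B0m T'm Tm MH_comp[OF B0m B2m T'm d(1) MH_tens[OF B0m B0m B2m B0m d(1) MH_id[OF B0m]]] MH_as[OF B0m B0m B0m]])
    have inD: "(B0 \<odot> (B0 \<odot> B0), mu_tens C B0 m0 (B0 \<odot> B0) (mu_tens C B0 m0 B0 m0), unit_tens C u0 (unit_tens C u0 u0), (Id A \<otimes> ((Id B0 \<otimes> d) \<bullet> d)) \<bullet> r0) \<in> D"
      by (rule Dco[OF init_in Tm h1])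
    have eq: "(Id A \<otimes> (as B0 B0 B0 \<bullet> ((d \<otimes> Id B0) \<bullet> d))) \<bullet> r0 = (Id A \<otimes> ((Id B0 \<otimes> d) \<bullet> d)) \<bullet> r0"
      using coassoc_diag[OF r0 dd(1-3) d(2)] by simp
    show ?thesis by (rule Dun[OF inD h2 eq h1 refl])
  qed
  have IBm: "monoid_obj C (I \<odot> B0) (mu_tens C I (lu0 I) B0 m0) (unit_tens C (Id I) u0)" by (rule TM[OF Im B0m])
  have BIm: "monoid_obj C (B0 \<odot> I) (mu_tens C B0 m0 I (lu0 I)) (unit_tens C u0 (Id I))" by (rule TM[OF B0m Im])
  have counit_l: "lu0 B0 \<bullet> ((e \<otimes> Id B0) \<bullet> d) = Id B0"
  proof -
    have h: "monoid_hom C B0 m0 u0 B0 m0 u0 (lu0 B0 \<bullet> ((e \<otimes> Id B0) \<bullet> d))"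
      by (rule MH_comp[OF B0m IBm B0m MH_comp[OF B0m B2m IBm d(1) MH_tens[OF B0m B0m Im B0m e(1) MH_id[OF B0m]]] MH_lu[OF B0m]])
    have eq: "(Id A \<otimes> (lu0 B0 \<bullet> ((e \<otimes> Id B0) \<bullet> d))) \<bullet> r0 = r0"
      by (rule counit_l_diag[OF r0 dd(1-3) ee(1-3) d(2) e(2)])
    have eq2: "(Id A \<otimes> Id B0) \<bullet> r0 = r0" using r0 by simp
    show ?thesis by (rule Dun[OF init_in h eq MH_id[OF B0m] eq2])
  qed
  have counit_r: "ru0 B0 \<bullet> ((Id B0 \<otimes> e) \<bullet> d) = Id B0"
  proof -
    have h: "monoid_hom C B0 m0 u0 B0 m0 u0 (ru0 B0 \<bullet> ((Id B0 \<otimes> e) \<bullet> d))"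
      by (rule MH_comp[OF B0m BIm B0m MH_comp[OF B0m B2m BIm d(1) MH_tens[OF B0m B0m B0m Im MH_id[OF B0m] e(1)]] MH_ru[OF B0m]])
    have eq: "(Id A \<otimes> (ru0 B0 \<bullet> ((Id B0 \<otimes> e) \<bullet> d))) \<bullet> r0 = r0"
      by (rule counit_r_diag[OF r0 dd(1-3) ee(1-3) d(2) e(2)])
    have eq2: "(Id A \<otimes> Id B0) \<bullet> r0 = r0" using r0 by simp
    show ?thesis by (rule Dun[OF init_in h eq MH_id[OF B0m] eq2])
  qed
  have com: "comonoid_obj C B0 d e"
    unfolding comonoid_obj_def hom_def using dd ee coassoc counit_l counit_r by simp
  have bim: "bimonoid_obj C B0 m0 u0 d e"
    unfolding bimonoid_obj_def using B0m com d(1) e(1) by simp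
  have ceq2: "ru0 A \<bullet> ((Id A \<otimes> e) \<bullet> r0) = Id A" unfolding e(2) by simp
  have coact: "coaction C Om s t ops A B0 m0 u0 d e r0"
    unfolding coaction_def using bim Dc[OF init_in] d(2)[symmetric] ceq2 by blast
  have part1: "\<exists>!(d, e). coaction C Om s t ops A B0 m0 u0 d e r0"
  proof (rule ex1I[of _ "(d, e)"])
    show "case (d, e) of (d, e) \<Rightarrow> coaction C Om s t ops A B0 m0 u0 d e r0" using coact by simp
  next
    fix p assume p: "case p of (d, e) \<Rightarrow> coaction C Om s t ops A B0 m0 u0 d e r0"
    obtain d1 e1 where pe: "p = (d1, e1)" by (cases p)
    with p have c: "coaction C Om s t ops A B0 m0 u0 d1 e1 r0" by simp
    have b1: "bimonoid_obj C B0 m0 u0 d1 e1" and c2: "as A B0 B0 \<bullet> ((r0 \<otimes> Id B0) \<bullet> r0) = (Id A \<otimes> d1) \<bullet> r0"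
      and c3: "ru0 A \<bullet> ((Id A \<otimes> e1) \<bullet> r0) = Id A"
      using c unfolding coaction_def by blast+
    have d1: "monoid_hom C B0 m0 u0 (B0 \<odot> B0) (mu_tens C B0 m0 B0 m0) (unit_tens C u0 u0) d1"
      and e1: "monoid_hom C B0 m0 u0 I (lu0 I) (Id I) e1"
      using b1 unfolding bimonoid_obj_def by blast+
    note ee1 = monoid_homD[OF e1]
    have e1r: "(Id A \<otimes> e1) \<bullet> r0 = ru' A"
      by (rule ru'_uniq) (use r0 ee1 c3 in simp_all)
    have "d1 = d" by (rule Dun[OF sq_in d1 c2[symmetric] d(1) d(2)])
    moreover have "e1 = e" by (rule Dun[OF unit_in e1 e1r e(1) e(2)])
    ultimately show "p = (d, e)" using pe by simp
  qed
  have part2: "\<forall>d e. coaction C Om s t ops A B0 m0 u0 d e r0 \<longrightarrow>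
            (\<forall>B m u d' e' r. coaction C Om s t ops A B m u d' e' r \<and> (B, m, u, r) \<in> D \<longrightarrow>
               (\<exists>!\<phi>. bimonoid_hom C B0 m0 u0 d e B m u d' e' \<phi>
                      \<and> cmp C (tnm C (idt C A) \<phi>) r0 = r))"
  proof (intro allI impI)
    fix d1 e1 B m u d2 e2 r
    assume c: "coaction C Om s t ops A B0 m0 u0 d1 e1 r0"
      and cB: "coaction C Om s t ops A B m u d2 e2 r \<and> (B, m, u, r) \<in> D"
    have inB: "(B, m, u, r) \<in> D" using cB by blast
    have b1: "bimonoid_obj C B0 m0 u0 d1 e1" and c2: "as A B0 B0 \<bullet> ((r0 \<otimes> Id B0) \<bullet> r0) = (Id A \<otimes> d1) \<bullet> r0"
      and c3: "ru0 A \<bullet> ((Id A \<otimes> e1) \<bullet> r0) = Id A"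
      using c unfolding coaction_def by blast+
    have d1: "monoid_hom C B0 m0 u0 (B0 \<odot> B0) (mu_tens C B0 m0 B0 m0) (unit_tens C u0 u0) d1"
      and e1: "monoid_hom C B0 m0 u0 I (lu0 I) (Id I) e1"
      using b1 unfolding bimonoid_obj_def by blast+
    note dd1 = monoid_homD[OF d1] and ee1 = monoid_homD[OF e1]
    have e1r: "(Id A \<otimes> e1) \<bullet> r0 = ru' A"
      by (rule ru'_uniq) (use r0 ee1 c3 in simp_all)
    have bB: "bimonoid_obj C B m u d2 e2" and cB2: "as A B B \<bullet> ((r \<otimes> Id B) \<bullet> r) = (Id A \<otimes> d2) \<bullet> r"
      and cB3: "ru0 A \<bullet> ((Id A \<otimes> e2) \<bullet> r) = Id A"
      using cB unfolding coaction_def by blast+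
    have Bm: "monoid_obj C B m u" using Dmon[OF inB] .
    have rB: "Arr r" "Dm r = A" "Cd r = A \<odot> B" using Dr[OF inB] by auto
    have d2: "monoid_hom C B m u (B \<odot> B) (mu_tens C B m B m) (unit_tens C u u) d2"
      and e2: "monoid_hom C B m u I (lu0 I) (Id I) e2"
      using bB unfolding bimonoid_obj_def by blast+
    note dd2 = monoid_homD[OF d2] and ee2 = monoid_homD[OF e2]
    have e2r: "(Id A \<otimes> e2) \<bullet> r = ru' A"
      by (rule ru'_uniq) (use rB ee2 cB3 in simp_all)
    obtain \<phi> where \<phi>: "monoid_hom C B0 m0 u0 B m u \<phi>" "(Id A \<otimes> \<phi>) \<bullet> r0 = r"
      using Dex[OF inB] by blast
    note ph = monoid_homD[OF \<phi>(1)]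
    have BBm: "monoid_obj C (B \<odot> B) (mu_tens C B m B m) (unit_tens C u u)" by (rule TM[OF Bm Bm])
    have ff: "monoid_hom C (B0 \<odot> B0) (mu_tens C B0 m0 B0 m0) (unit_tens C u0 u0) (B \<odot> B) (mu_tens C B m B m) (unit_tens C u u) (\<phi> \<otimes> \<phi>)"
      by (rule MH_tens[OF B0m B0m Bm Bm \<phi>(1) \<phi>(1)])
    have g1: "monoid_hom C B0 m0 u0 (B \<odot> B) (mu_tens C B m B m) (unit_tens C u u) ((\<phi> \<otimes> \<phi>) \<bullet> d1)"
      by (rule MH_comp[OF B0m B2m BBm d1 ff])
    have g2: "monoid_hom C B0 m0 u0 (B \<odot> B) (mu_tens C B m B m) (unit_tens C u u) (d2 \<bullet> \<phi>)"
      by (rule MH_comp[OF B0m Bm BBm \<phi>(1) d2])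
    have inD: "(B \<odot> B, mu_tens C B m B m, unit_tens C u u, (Id A \<otimes> (\<phi> \<otimes> \<phi>)) \<bullet> (as A B0 B0 \<bullet> ((r0 \<otimes> Id B0) \<bullet> r0))) \<in> D"
      using Dco[OF sq_in BBm ff] by simp
    have eq1: "(Id A \<otimes> ((\<phi> \<otimes> \<phi>) \<bullet> d1)) \<bullet> r0 = (Id A \<otimes> (\<phi> \<otimes> \<phi>)) \<bullet> (as A B0 B0 \<bullet> ((r0 \<otimes> Id B0) \<bullet> r0))"
    proof -
      have "(Id A \<otimes> ((\<phi> \<otimes> \<phi>) \<bullet> d1)) \<bullet> r0 = (Id A \<otimes> (\<phi> \<otimes> \<phi>)) \<bullet> ((Id A \<otimes> d1) \<bullet> r0)"
        using r0 dd1 ph by simp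
      also have "\<dots> = (Id A \<otimes> (\<phi> \<otimes> \<phi>)) \<bullet> (as A B0 B0 \<bullet> ((r0 \<otimes> Id B0) \<bullet> r0))" by (simp only: c2)
      finally show ?thesis .
    qed
    have eq2: "(Id A \<otimes> (d2 \<bullet> \<phi>)) \<bullet> r0 = (Id A \<otimes> (\<phi> \<otimes> \<phi>)) \<bullet> (as A B0 B0 \<bullet> ((r0 \<otimes> Id B0) \<bullet> r0))"
    proof -
      have "(Id A \<otimes> (d2 \<bullet> \<phi>)) \<bullet> r0 = (Id A \<otimes> d2) \<bullet> ((Id A \<otimes> \<phi>) \<bullet> r0)"
        using r0 dd2 ph by simp
      also have "\<dots> = (Id A \<otimes> d2) \<bullet> r" by (simp only: \<phi>(2))
      also have "\<dots> = as A B B \<bullet> ((r \<otimes> Id B) \<bullet> r)" by (simp only: cB2)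
      also have "\<dots> = (Id A \<otimes> (\<phi> \<otimes> \<phi>)) \<bullet> (as A B0 B0 \<bullet> ((r0 \<otimes> Id B0) \<bullet> r0))"
        by (rule comult_diag[OF r0 rB ph(1-3) \<phi>(2), symmetric])
      finally show ?thesis .
    qed
    have co1: "(\<phi> \<otimes> \<phi>) \<bullet> d1 = d2 \<bullet> \<phi>" by (rule Dun[OF inD g1 eq1 g2 eq2])
    have h3: "monoid_hom C B0 m0 u0 I (lu0 I) (Id I) (e2 \<bullet> \<phi>)" by (rule MH_comp[OF B0m Bm Im \<phi>(1) e2])
    have eq3: "(Id A \<otimes> (e2 \<bullet> \<phi>)) \<bullet> r0 = ru' A"
    proof -
      have "(Id A \<otimes> (e2 \<bullet> \<phi>)) \<bullet> r0 = (Id A \<otimes> e2) \<bullet> ((Id A \<otimes> \<phi>) \<bullet> r0)"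
        using r0 ee2 ph by simp
      also have "\<dots> = (Id A \<otimes> e2) \<bullet> r" by (simp only: \<phi>(2))
      also have "\<dots> = ru' A" by (rule e2r)
      finally show ?thesis .
    qed
    have co2: "e2 \<bullet> \<phi> = e1" by (rule Dun[OF unit_in h3 eq3 e1 e1r])
    have bh: "bimonoid_hom C B0 m0 u0 d1 e1 B m u d2 e2 \<phi>"
      unfolding bimonoid_hom_def comonoid_hom_def using \<phi>(1) co1 co2 ph by (simp add: hom_def)
    show "\<exists>!\<phi>. bimonoid_hom C B0 m0 u0 d1 e1 B m u d2 e2 \<phi> \<and> cmp C (tnm C (idt C A) \<phi>) r0 = r"
    proof (rule ex1I[of _ \<phi>])
      show "bimonoid_hom C B0 m0 u0 d1 e1 B m u d2 e2 \<phi> \<and> cmp C (tnm C (idt C A) \<phi>) r0 = r" using bh \<phi>(2) by simp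
    next
      fix \<psi> assume "bimonoid_hom C B0 m0 u0 d1 e1 B m u d2 e2 \<psi> \<and> cmp C (tnm C (idt C A) \<psi>) r0 = r"
      hence "monoid_hom C B0 m0 u0 B m u \<psi>" "(Id A \<otimes> \<psi>) \<bullet> r0 = r" unfolding bimonoid_hom_def by auto
      thus "\<psi> = \<phi>" using Dun[OF inB _ _ \<phi>(1) \<phi>(2)] by blast
    qed
  qed
  show ?thesis using part1 part2 by blast
qed

end

theorem theorem4p31:
  fixes C :: "('o,'m) bmcat" and Om :: "'w set" and s t :: "'w \<Rightarrow> nat"
    and ops :: "'w \<Rightarrow> 'm" and A :: 'o
    and D :: "('o \<times> 'm \<times> 'm \<times> 'm) set"
    and B0 :: 'o and m0 u0 r0 :: 'm
  assumes bmc: "braided_monoidal_cat C"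
    and magma: "omega_magma C Om s t A ops"
    and D_sub: "\<forall>(Q, m, u, r) \<in> D. comeasuring C Om s t ops ops A A Q m u r"
    and init_in: "(B0, m0, u0, r0) \<in> D"
    and init: "\<forall>(Q, m, u, r) \<in> D. \<exists>!\<phi>. monoid_hom C B0 m0 u0 Q m u \<phi>
                  \<and> cmp C (tnm C (idt C A) \<phi>) r0 = r"
    and coarsen: "\<forall>(Q1, m1, u1, r) \<in> D. \<forall>Q2 m2 u2 \<tau>.
                  monoid_obj C Q2 m2 u2 \<and> monoid_hom C Q1 m1 u1 Q2 m2 u2 \<tau>
                  \<longrightarrow> (Q2, m2, u2, cmp C (tnm C (idt C A) \<tau>) r) \<in> D"
    and unit_in: "(un C, lu C (un C), idt C (un C), inv_arr C (ru C A)) \<in> D"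
    and sq_in: "(tns C B0 B0, mu_tens C B0 m0 B0 m0, unit_tens C u0 u0,
                 cmp C (asc C A B0 B0) (cmp C (tnm C r0 (idt C B0)) r0)) \<in> D"
  shows "(\<exists>!(d, e). coaction C Om s t ops A B0 m0 u0 d e r0) \<and>
         (\<forall>d e. coaction C Om s t ops A B0 m0 u0 d e r0 \<longrightarrow>
            (\<forall>B m u d' e' r. coaction C Om s t ops A B m u d' e' r \<and> (B, m, u, r) \<in> D \<longrightarrow>
               (\<exists>!\<phi>. bimonoid_hom C B0 m0 u0 d e B m u d' e' \<phi>
                      \<and> cmp C (tnm C (idt C A) \<phi>) r0 = r)))"
  by (rule BMC.main[OF BMC.intro[OF bmc] magma D_sub init_in init coarsen unit_in sq_in])

end
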